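(* Let $(q_n),(r_n)$ be complex sequences vanishing faster than any negative power of $|n|$ as $n\to\pm\infty$ with $1-q_nr_n\neq0$ and $1+q_nr_{n+1}\ne0$ for all $n$, and let $u_n,v_n,p_n,s_n,D_\infty,E_\infty$ be as in the context. Let $T,\bar T,R,\bar R,L,\bar L$ be the scattering coefficients of system (Q) (where $T=T_{\rm l}=T_{\rm r}$, $\bar T=\bar T_{\rm l}=\bar T_{\rm r}$), and use superscripts $(u,v)$, $(p,s)$ for the scattering coefficients of system (U) with potentials $(u,v)$, $(p,s)$. Then $$T_{\rm l}^{(u,v)}=T_{\rm l}^{(p,s)}=D_\infty T,\quad T_{\rm r}^{(u,v)}=T_{\rm r}^{(p,s)}=\frac{T}{E_\infty},\quad \bar T_{\rm l}^{(u,v)}=\bar T_{\rm l}^{(p,s)}=E_\infty\bar T,\quad \bar T_{\rm r}^{(u,v)}=\bar T_{\rm r}^{(p,s)}=\frac{\bar T}{D_\infty},$$ $$R^{(u,v)}=(1-z^{-2})\frac{D_\infty}{E_\infty}R,\quad R^{(p,s)}=\frac{D_\infty}{E_\infty}R,\quad \bar R^{(u,v)}=\frac{1}{1-z^{-2}}\frac{E_\infty}{D_\infty}\bar R,\quad \bar R^{(p,s)}=\frac{E_\infty}{D_\infty}\bar R,$$ $$L^{(u,v)}=\frac{1}{1-z^{-2}}L,\quad L^{(p,s)}=L,\quad \bar L^{(u,v)}=(1-z^{-2})\bar L,\quad \bar L^{(p,s)}=\bar L.$$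
   Context: System (Q): $\begin{bmatrix}\alpha_n\\ \beta_n\end{bmatrix}=\begin{bmatrix} z & (z-z^{-1})q_n\\ z r_n & z^{-1}+(z-z^{-1})q_nr_n\end{bmatrix}\begin{bmatrix}\alpha_{n+1}\\ \beta_{n+1}\end{bmatrix}$. System (U) with potentials $(a,b)$: $\begin{bmatrix}\xi_n\\ \eta_n\end{bmatrix}=\begin{bmatrix} z & z a_n\\ z^{-1}b_n & z^{-1}\end{bmatrix}\begin{bmatrix}\xi_{n+1}\\ \eta_{n+1}\end{bmatrix}$. Notation: $D_n=\prod_{j\le n}(1-q_jr_j)$, $E_n=\prod_{j\le n}(1+q_jr_{j+1})$, $D_\infty$, $E_\infty$ the full products over $j\in\mathbb Z$; $u_n=q_nE_{n-1}/D_n$, $v_n=(-r_n+r_{n+1}-q_nr_nr_{n+1})D_{n-1}/E_n$, $p_n=(q_n-q_{n+1}-q_nq_{n+1}r_{n+1})E_{n-1}/D_{n+1}$, $s_n=r_{n+1}D_n/E_n$. For each system and $|z|=1$, the Jost solutions (overbars are not complex conjugation) are given by $\psi_n=\begin{bmatrix}o(1)\\ z^n[1+o(1)]\end{bmatrix}$ ($n\to+\infty$), $\phi_n=\begin{bmatrix}z^{-n}[1+o(1)]\\ o(1)\end{bmatrix}$ ($n\to-\infty$), $\bar\psi_n=\begin{bmatrix}z^{-n}[1+o(1)]\\ o(1)\end{bmatrix}$ ($n\to+\infty$), $\bar\phi_n=\begin{bmatrix}o(1)\\ z^{n}[1+o(1)]\end{bmatrix}$ ($n\to-\infty$), and the scattering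 coefficients by $\psi_n=\begin{bmatrix}(L/T_{\rm l})z^{-n}[1+o(1)]\\ (1/T_{\rm l})z^{n}[1+o(1)]\end{bmatrix}$ ($n\to-\infty$), $\phi_n=\begin{bmatrix}(1/T_{\rm r})z^{-n}[1+o(1)]\\ (R/T_{\rm r})z^{n}[1+o(1)]\end{bmatrix}$ ($n\to+\infty$), $\bar\psi_n=\begin{bmatrix}(1/\bar T_{\rm l})z^{-n}[1+o(1)]\\ (\bar L/\bar T_{\rm l})z^{n}[1+o(1)]\end{bmatrix}$ ($n\to-\infty$), $\bar\phi_n=\begin{bmatrix}(\bar R/\bar T_{\rm r})z^{-n}[1+o(1)]\\ (1/\bar T_{\rm r})z^{n}[1+o(1)]\end{bmatrix}$ ($n\to+\infty$). *)

theory Defs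
  imports Complex_Main
begin

text \<open>A 2x2 first-order discrete system X n = M n z * X (n+1); the coefficient matrix
  is given by its four entries (a, b, c, d) = [[a, b], [c, d]].\<close>

type_synonym sys = "int \<Rightarrow> complex \<Rightarrow> complex \<times> complex \<times> complex \<times> complex"

definition solves :: "sys \<Rightarrow> complex \<Rightarrow> (int \<Rightarrow> complex \<times> complex) \<Rightarrow> bool" where
  "solves M z X \<longleftrightarrow> (\<forall>n. case M n z of (a, b, c, d) \<Rightarrow>
      fst (X n) = a * fst (X (n+1)) + b * snd (X (n+1)) \<and>
      snd (X n) = c * fst (X (n+1)) + d * snd (X (n+1)))"

definition sysQ :: "(int \<Rightarrow> complex) \<Rightarrow> (int \<Rightarrow> complex) \<Rightarrow> sys" where
  "sysQ q r = (\<lambda>n z. (z, (z - inverse z) * q n, z * r n, inverse z + (z - inverse z) * q n * r n))"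

definition sysU :: "(int \<Rightarrow> complex) \<Rightarrow> (int \<Rightarrow> complex) \<Rightarrow> sys" where
  "sysU a b = (\<lambda>n z. (z, z * a n, inverse z * b n, inverse z))"

definition is_psi :: "sys \<Rightarrow> complex \<Rightarrow> (int \<Rightarrow> complex \<times> complex) \<Rightarrow> bool" where
  "is_psi M z X \<longleftrightarrow> solves M z X \<and> ((\<lambda>n. fst (X n)) \<longlongrightarrow> 0) at_top
     \<and> ((\<lambda>n. snd (X n) * z powi (-n)) \<longlongrightarrow> 1) at_top"

definition is_phi :: "sys \<Rightarrow> complex \<Rightarrow> (int \<Rightarrow> complex \<times> complex) \<Rightarrow> bool" where
  "is_phi M z X \<longleftrightarrow> solves M z X \<and> ((\<lambda>n. fst (X n) * z powi n) \<longlongrightarrow> 1) at_bot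
     \<and> ((\<lambda>n. snd (X n)) \<longlongrightarrow> 0) at_bot"

definition is_psibar :: "sys \<Rightarrow> complex \<Rightarrow> (int \<Rightarrow> complex \<times> complex) \<Rightarrow> bool" where
  "is_psibar M z X \<longleftrightarrow> solves M z X \<and> ((\<lambda>n. fst (X n) * z powi n) \<longlongrightarrow> 1) at_top
     \<and> ((\<lambda>n. snd (X n)) \<longlongrightarrow> 0) at_top"

definition is_phibar :: "sys \<Rightarrow> complex \<Rightarrow> (int \<Rightarrow> complex \<times> complex) \<Rightarrow> bool" where
  "is_phibar M z X \<longleftrightarrow> solves M z X \<and> ((\<lambda>n. fst (X n)) \<longlongrightarrow> 0) at_bot
     \<and> ((\<lambda>n. snd (X n) * z powi (-n)) \<longlongrightarrow> 1) at_bot"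

definition psi :: "sys \<Rightarrow> complex \<Rightarrow> int \<Rightarrow> complex \<times> complex" where
  "psi M z = (THE X. is_psi M z X)"
definition phi :: "sys \<Rightarrow> complex \<Rightarrow> int \<Rightarrow> complex \<times> complex" where
  "phi M z = (THE X. is_phi M z X)"
definition psibar :: "sys \<Rightarrow> complex \<Rightarrow> int \<Rightarrow> complex \<times> complex" where
  "psibar M z = (THE X. is_psibar M z X)"
definition phibar :: "sys \<Rightarrow> complex \<Rightarrow> int \<Rightarrow> complex \<times> complex" where
  "phibar M z = (THE X. is_phibar M z X)"

definition Tl :: "sys \<Rightarrow> complex \<Rightarrow> complex" where
  "Tl M z = 1 / Lim at_bot (\<lambda>n. snd (psi M z n) * z powi (-n))"
definition Lc :: "sys \<Rightarrow> complex \<Rightarrow> complex" where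
  "Lc M z = Tl M z * Lim at_bot (\<lambda>n. fst (psi M z n) * z powi n)"
definition Tr :: "sys \<Rightarrow> complex \<Rightarrow> complex" where
  "Tr M z = 1 / Lim at_top (\<lambda>n. fst (phi M z n) * z powi n)"
definition Rc :: "sys \<Rightarrow> complex \<Rightarrow> complex" where
  "Rc M z = Tr M z * Lim at_top (\<lambda>n. snd (phi M z n) * z powi (-n))"
definition Tlbar :: "sys \<Rightarrow> complex \<Rightarrow> complex" where
  "Tlbar M z = 1 / Lim at_bot (\<lambda>n. fst (psibar M z n) * z powi n)"
definition Lbar :: "sys \<Rightarrow> complex \<Rightarrow> complex" where
  "Lbar M z = Tlbar M z * Lim at_bot (\<lambda>n. snd (psibar M z n) * z powi (-n))"
definition Trbar :: "sys \<Rightarrow> complex \<Rightarrow> complex" where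
  "Trbar M z = 1 / Lim at_top (\<lambda>n. snd (phibar M z n) * z powi (-n))"
definition Rbar :: "sys \<Rightarrow> complex \<Rightarrow> complex" where
  "Rbar M z = Trbar M z * Lim at_top (\<lambda>n. fst (phibar M z n) * z powi n)"

definition Dp :: "(int \<Rightarrow> complex) \<Rightarrow> (int \<Rightarrow> complex) \<Rightarrow> int \<Rightarrow> complex" where
  "Dp q r n = Lim at_bot (\<lambda>m. \<Prod>j\<in>{m..n}. 1 - q j * r j)"
definition Ep :: "(int \<Rightarrow> complex) \<Rightarrow> (int \<Rightarrow> complex) \<Rightarrow> int \<Rightarrow> complex" where
  "Ep q r n = Lim at_bot (\<lambda>m. \<Prod>j\<in>{m..n}. 1 + q j * r (j+1))"
definition Dinf :: "(int \<Rightarrow> complex) \<Rightarrow> (int \<Rightarrow> complex) \<Rightarrow> complex" where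
  "Dinf q r = Lim at_top (Dp q r)"
definition Einf :: "(int \<Rightarrow> complex) \<Rightarrow> (int \<Rightarrow> complex) \<Rightarrow> complex" where
  "Einf q r = Lim at_top (Ep q r)"

definition uu where "uu q r n = q n * Ep q r (n-1) / Dp q r n"
definition vv where "vv q r n = (- r n + r (n+1) - q n * r n * r (n+1)) * Dp q r (n-1) / Ep q r n"
definition pp where "pp q r n = (q n - q (n+1) - q n * q (n+1) * r (n+1)) * Ep q r (n-1) / Dp q r (n+1)"
definition ss where "ss q r n = r (n+1) * Dp q r n / Ep q r n"

definition rapid_decay :: "(int \<Rightarrow> complex) \<Rightarrow> bool" where
  "rapid_decay f \<longleftrightarrow> (\<forall>k::nat.
     ((\<lambda>n. real_of_int \<bar>n\<bar> ^ k * norm (f n)) \<longlongrightarrow> 0) at_top \<and>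
     ((\<lambda>n. real_of_int \<bar>n\<bar> ^ k * norm (f n)) \<longlongrightarrow> 0) at_bot)"

end

theory Submission
  imports Defs "HOL-Analysis.Analysis"
begin

lemma tendsto_int_top:
  assumes "((\<lambda>i. f (int i)) \<longlongrightarrow> L) sequentially"
  shows "(f \<longlongrightarrow> L) at_top"
proof -
  have h: "((\<lambda>n. f (int (nat n))) \<longlongrightarrow> L) at_top"
    by (rule filterlim_compose[OF assms filterlim_nat_sequentially])
  have ev: "eventually (\<lambda>n. f (int (nat n)) = f n) at_top"
    using eventually_ge_at_top[of "0::int"] by eventually_elim simp
  show ?thesis by (rule iffD1[OF tendsto_cong[OF ev] h])
qed

lemma filterlim_natneg: "filterlim (\<lambda>n::int. nat (- n)) sequentially at_bot"
  unfolding filterlim_at_top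
proof
  fix Z :: nat
  show "eventually (\<lambda>x. Z \<le> nat (- x)) at_bot"
    using eventually_le_at_bot[of "- int Z"] by eventually_elim simp
qed

lemma tendsto_int_bot:
  assumes "((\<lambda>i. f (- int i)) \<longlongrightarrow> L) sequentially"
  shows "(f \<longlongrightarrow> L) at_bot"
proof -
  have h: "((\<lambda>n. f (- int (nat (- n)))) \<longlongrightarrow> L) at_bot"
    by (rule filterlim_compose[OF assms filterlim_natneg])
  have ev: "eventually (\<lambda>n. f (- int (nat (-n))) = f n) at_bot"
    using eventually_le_at_bot[of "0::int"] by eventually_elim simp
  show ?thesis by (rule iffD1[OF tendsto_cong[OF ev] h])
qed

lemma filterlim_int_shift_top: "filterlim (\<lambda>n::int. n + c) at_top at_top"
  unfolding filterlim_at_top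
proof
  fix Z :: int
  show "eventually (\<lambda>x. Z \<le> x + c) at_top"
    using eventually_ge_at_top[of "Z - c"] by eventually_elim simp
qed

lemma filterlim_int_shift_bot: "filterlim (\<lambda>n::int. n + c) at_bot at_bot"
  unfolding filterlim_at_bot
proof
  fix Z :: int
  show "eventually (\<lambda>x. x + c \<le> Z) at_bot"
    using eventually_le_at_bot[of "Z - c"] by eventually_elim simp
qed

lemma tendsto_shift_top: "(f \<longlongrightarrow> L) at_top \<Longrightarrow> ((\<lambda>n::int. f (n + c)) \<longlongrightarrow> L) at_top"
  by (rule filterlim_compose[OF _ filterlim_int_shift_top])

lemma tendsto_shift_bot: "(f \<longlongrightarrow> L) at_bot \<Longrightarrow> ((\<lambda>n::int. f (n + c)) \<longlongrightarrow> L) at_bot"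
  by (rule filterlim_compose[OF _ filterlim_int_shift_bot])

definition sum2 :: "(int \<Rightarrow> real) \<Rightarrow> bool" where
  "sum2 k \<longleftrightarrow> (\<forall>n. 0 \<le> k n) \<and> summable (\<lambda>i. k (int i)) \<and> summable (\<lambda>i. k (- int i))"

definition S2 :: "(int \<Rightarrow> real) \<Rightarrow> real" where
  "S2 k = suminf (\<lambda>i. k (int i)) + suminf (\<lambda>i. k (- int i))"

lemma sum2_le_S2:
  assumes "sum2 k" shows "sum k {n..<m} \<le> S2 k"
proof -
  define N where "N = nat \<bar>n\<bar> + nat \<bar>m\<bar> + 1"
  have k0: "\<And>j. 0 \<le> k j" using assms by (simp add: sum2_def)
  have sub: "{n..<m} \<subseteq> int ` {..<N} \<union> (\<lambda>i. - int i) ` {..<N}"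
  proof
    fix x assume "x \<in> {n..<m}"
    show "x \<in> int ` {..<N} \<union> (\<lambda>i. - int i) ` {..<N}"
    proof (cases "0 \<le> x")
      case True
      then have "x = int (nat x)" "nat x < N" using \<open>x \<in> {n..<m}\<close> by (auto simp: N_def)
      then show ?thesis by blast
    next
      case False
      then have "x = - int (nat (-x))" "nat (-x) < N" using \<open>x \<in> {n..<m}\<close> by (auto simp: N_def)
      then show ?thesis by blast
    qed
  qed
  have "sum k {n..<m} \<le> sum k (int ` {..<N} \<union> (\<lambda>i. - int i) ` {..<N})"
    by (rule sum_mono2[OF _ sub]) (auto simp: k0)
  also have "\<dots> \<le> sum k (int ` {..<N}) + sum k ((\<lambda>i. - int i) ` {..<N})"
    by (subst sum_Un) (auto intro: sum_nonneg simp: k0)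
  also have "sum k (int ` {..<N}) = (\<Sum>i<N. k (int i))"
    by (subst sum.reindex) (auto simp: inj_on_def)
  also have "sum k ((\<lambda>i. - int i) ` {..<N}) = (\<Sum>i<N. k (- int i))"
    by (subst sum.reindex) (auto simp: inj_on_def)
  also have "(\<Sum>i<N. k (int i)) \<le> suminf (\<lambda>i. k (int i))"
    using assms by (intro sum_le_suminf) (auto simp: sum2_def)
  also have "(\<Sum>i<N. k (- int i)) \<le> suminf (\<lambda>i. k (- int i))"
    using assms by (intro sum_le_suminf) (auto simp: sum2_def)
  finally show ?thesis by (simp add: S2_def)
qed


lemma grow_back:
  fixes N k :: "int \<Rightarrow> real"
  assumes st: "\<And>n. N n \<le> (1 + k n) * N (n+1)" and N0: "\<And>n. 0 \<le> N n" and k0: "\<And>n. 0 \<le> k n"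
    and nm: "n \<le> m"
  shows "N n \<le> exp (sum k {n..<m}) * N m"
proof (rule int_le_induct[where P="\<lambda>i. N i \<le> exp (sum k {i..<m}) * N m", OF nm])
  show "N m \<le> exp (sum k {m..<m}) * N m" by simp
next
  fix i assume hyps: "i \<le> m" and IH: "N i \<le> exp (sum k {i..<m}) * N m"
  have "N (i - 1) \<le> (1 + k (i - 1)) * N i" using st[of "i-1"] by simp
  also have "\<dots> \<le> exp (k (i - 1)) * (exp (sum k {i..<m}) * N m)"
    by (intro mult_mono IH) (auto simp: N0 k0 exp_ge_add_one_self add.commute)
  also have "{i - 1..<m} = insert (i - 1) {i..<m}" using hyps by auto
  then have "sum k {i - 1..<m} = k (i - 1) + sum k {i..<m}" by simp
  then have "exp (k (i - 1)) * (exp (sum k {i..<m}) * N m) = exp (sum k {i - 1..<m}) * N m"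
    by (simp add: exp_add)
  finally show "N (i - 1) \<le> exp (sum k {i - 1..<m}) * N m" .
qed

lemma grow_fwd:
  fixes N k :: "int \<Rightarrow> real"
  assumes st: "\<And>n. N (n+1) \<le> (1 + k n) * N n" and N0: "\<And>n. 0 \<le> N n" and k0: "\<And>n. 0 \<le> k n"
    and nm: "n \<le> m"
  shows "N m \<le> exp (sum k {n..<m}) * N n"
proof (rule int_ge_induct[where P="\<lambda>i. N i \<le> exp (sum k {n..<i}) * N n", OF nm])
  show "N n \<le> exp (sum k {n..<n}) * N n" by simp
next
  fix i assume hyps: "n \<le> i" and IH: "N i \<le> exp (sum k {n..<i}) * N n"
  have "N (i + 1) \<le> (1 + k i) * N i" using st[of i] by simp
  also have "\<dots> \<le> exp (k i) * (exp (sum k {n..<i}) * N n)"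
    by (intro mult_mono IH) (auto simp: N0 k0 exp_ge_add_one_self add.commute)
  also have "{n..<i+1} = insert i {n..<i}" using hyps by auto
  then have "sum k {n..<i+1} = k i + sum k {n..<i}" by simp
  then have "exp (k i) * (exp (sum k {n..<i}) * N n) = exp (sum k {n..<i+1}) * N n"
    by (simp add: exp_add)
  finally show "N (i + 1) \<le> exp (sum k {n..<i + 1}) * N n" .
qed

lemma sum2_nonneg: "sum2 k \<Longrightarrow> 0 \<le> k n" by (simp add: sum2_def)

lemma bounded_both:
  fixes N k :: "int \<Rightarrow> real"
  assumes "sum2 k" and b: "\<And>n. N n \<le> (1 + k n) * N (n+1)" and f: "\<And>n. N (n+1) \<le> (1 + k n) * N n"
    and N0: "\<And>n. 0 \<le> N n"
  shows "N n \<le> exp (S2 k) * N 0"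
proof (cases "n \<le> 0")
  case True
  have "N n \<le> exp (sum k {n..<0}) * N 0"
    by (rule grow_back[where k=k, OF b N0 sum2_nonneg[OF assms(1)] True])
  also have "\<dots> \<le> exp (S2 k) * N 0"
    by (intro mult_right_mono N0) (simp add: sum2_le_S2[OF assms(1)])
  finally show ?thesis .
next
  case False
  have "N n \<le> exp (sum k {0..<n}) * N 0"
    by (rule grow_fwd[where k=k, OF f N0 sum2_nonneg[OF assms(1)]]) (use False in simp)
  also have "\<dots> \<le> exp (S2 k) * N 0"
    by (intro mult_right_mono N0) (simp add: sum2_le_S2[OF assms(1)])
  finally show ?thesis .
qed

lemma conv_both:
  fixes f :: "int \<Rightarrow> 'a::banach" and k :: "int \<Rightarrow> real"
  assumes "sum2 k" and d: "\<And>n. norm (f n - f (n+1)) \<le> B * k n"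
  shows "\<exists>L. (f \<longlongrightarrow> L) at_top" and "\<exists>L. (f \<longlongrightarrow> L) at_bot"
proof -
  have k0: "\<And>n. 0 \<le> k n" using assms(1) by (simp add: sum2_def)
  have sk1: "summable (\<lambda>i. k (int i))" and sk2: "summable (\<lambda>i. k (- int i))"
    using assms(1) by (auto simp: sum2_def)
  define g where "g i = f (int i)" for i
  have "summable (\<lambda>i. B * k (int i))" by (rule summable_mult[OF sk1])
  then have "summable (\<lambda>i. norm (g i - g (Suc i)))"
  proof (rule summable_comparison_test'[where N=0])
    fix i :: nat
    show "norm (norm (g i - g (Suc i))) \<le> B * k (int i)"
      using d[of "int i"] by (simp add: g_def add.commute)
  qed
  then have "summable (\<lambda>i. g i - g (Suc i))" by (rule summable_norm_cancel)
  then have "(\<lambda>m. \<Sum>i<m. g i - g (Suc i)) \<longlonglongrightarrow> suminf (\<lambda>i. g i - g (Suc i))"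
    by (rule summable_LIMSEQ)
  then have "(\<lambda>m. g 0 - (\<Sum>i<m. g i - g (Suc i))) \<longlonglongrightarrow> g 0 - suminf (\<lambda>i. g i - g (Suc i))"
    by (intro tendsto_diff tendsto_const)
  moreover have "(\<lambda>m. g 0 - (\<Sum>i<m. g i - g (Suc i))) = g"
    by (rule ext) (simp only: sum_lessThan_telescope' diff_diff_eq2 add_diff_cancel_left')
  ultimately have "\<exists>L. g \<longlonglongrightarrow> L" by auto
  moreover have "g = (\<lambda>m. f (int m))" by (rule ext) (simp only: g_def)
  ultimately have "\<exists>L. (\<lambda>m. f (int m)) \<longlonglongrightarrow> L" by (simp only:)
  then show "\<exists>L. (f \<longlongrightarrow> L) at_top" using tendsto_int_top by blast
  define h where "h i = f (- int i)" for i
  have "summable (\<lambda>i. k (- int (Suc i)))" by (rule iffD2[OF summable_Suc_iff[of "\<lambda>i. k (- int i)"] sk2])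
  then have sB: "summable (\<lambda>i. B * k (- int (Suc i)))" by (rule summable_mult)
  moreover have hb: "norm (h i - h (Suc i)) \<le> B * k (- int (Suc i))" for i
  proof -
    have e: "- int (Suc i) + 1 = - int i" by simp
    have "norm (h i - h (Suc i)) = norm (f (- int (Suc i)) - f (- int i))"
      unfolding h_def by (rule norm_minus_commute)
    also have "\<dots> \<le> B * k (- int (Suc i))" using d[of "- int (Suc i)"] unfolding e .
    finally show ?thesis .
  qed
  have "summable (\<lambda>i. norm (h i - h (Suc i)))"
  proof (rule summable_comparison_test'[where N=0, OF sB])
    fix i :: nat
    show "norm (norm (h i - h (Suc i))) \<le> B * k (- int (Suc i))" using hb[of i] by simp
  qed
  then have "summable (\<lambda>i. h i - h (Suc i))" by (rule summable_norm_cancel)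
  then have "(\<lambda>m. \<Sum>i<m. h i - h (Suc i)) \<longlonglongrightarrow> suminf (\<lambda>i. h i - h (Suc i))"
    by (rule summable_LIMSEQ)
  then have "(\<lambda>m. h 0 - (\<Sum>i<m. h i - h (Suc i))) \<longlonglongrightarrow> h 0 - suminf (\<lambda>i. h i - h (Suc i))"
    by (intro tendsto_diff tendsto_const)
  moreover have "(\<lambda>m. h 0 - (\<Sum>i<m. h i - h (Suc i))) = h"
    by (rule ext) (simp only: sum_lessThan_telescope' diff_diff_eq2 add_diff_cancel_left')
  ultimately have "\<exists>L. h \<longlonglongrightarrow> L" by auto
  moreover have "h = (\<lambda>m. f (- int m))" by (rule ext) (simp only: h_def)
  ultimately have "\<exists>L. (\<lambda>m. f (- int m)) \<longlonglongrightarrow> L" by (simp only:)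
  then show "\<exists>L. (f \<longlongrightarrow> L) at_bot" using tendsto_int_bot by blast
qed


lemma sum2_shift:
  assumes "sum2 k" shows "sum2 (\<lambda>n. k (n+1))"
proof -
  have s1: "summable (\<lambda>i. k (int i))" and s2: "summable (\<lambda>i. k (- int i))" and k0: "\<And>n. 0 \<le> k n"
    using assms by (auto simp: sum2_def)
  have e1: "(\<lambda>i. k (int i + 1)) = (\<lambda>i. (\<lambda>j. k (int j)) (Suc i))" by (rule ext) (simp add: add.commute)
  have "summable (\<lambda>i. k (int i + 1))" unfolding e1 by (rule iffD2[OF summable_Suc_iff s1])
  moreover have e2: "(\<lambda>i. (\<lambda>j. k (- int j + 1)) (Suc i)) = (\<lambda>i. k (- int i))" by (rule ext) simp
  have "summable (\<lambda>i. (\<lambda>j. k (- int j + 1)) (Suc i))" unfolding e2 by (rule s2)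
  then have "summable (\<lambda>j. k (- int j + 1))" by (rule iffD1[OF summable_Suc_iff])
  ultimately show ?thesis using k0 by (simp add: sum2_def)
qed

lemma S2_nonneg: "sum2 k \<Longrightarrow> 0 \<le> S2 k"
  using sum2_le_S2[of k 0 0] by simp

lemma prod_tail:
  fixes b :: "int \<Rightarrow> complex"
  assumes s: "sum2 (\<lambda>n. norm (1 - b n))"
  shows "norm (\<Prod>j\<in>{m..n}. b j) \<le> exp (S2 (\<lambda>n. norm (1 - b n)))"
    and "\<exists>L. ((\<lambda>m. \<Prod>j\<in>{m..n}. b j) \<longlongrightarrow> L) at_bot"
proof -
  define k where "k n = norm (1 - b n)" for n
  define G where "G m = (\<Prod>j\<in>{m..n}. b j)" for m
  have k0: "0 \<le> k j" for j by (simp add: k_def)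
  have Grec: "G m = (if m \<le> n then b m * G (m+1) else 1)" for m
  proof (cases "m \<le> n")
    case True
    then have "{m..n} = insert m {m+1..n}" by auto
    then show ?thesis using True by (simp add: G_def)
  next
    case False then show ?thesis by (simp add: G_def)
  qed
  have bnorm: "norm (b m) \<le> 1 + k m" for m
  proof -
    have "norm (b m) = norm (1 - (1 - b m))" by simp
    also have "\<dots> \<le> norm (1::complex) + norm (1 - b m)" by (rule norm_triangle_ineq4)
    finally show ?thesis by (simp add: k_def)
  qed
  have st: "norm (G m) \<le> (1 + k m) * norm (G (m+1))" for m
  proof (cases "m \<le> n")
    case True
    then have "norm (G m) = norm (b m) * norm (G (m+1))" using Grec[of m] by (simp add: norm_mult)
    also have "\<dots> \<le> (1 + k m) * norm (G (m+1))" by (intro mult_right_mono bnorm) simp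
    finally show ?thesis .
  next
    case False
    then have "G m = 1" "G (m+1) = 1" using Grec[of m] Grec[of "m+1"] by auto
    then show ?thesis using k0[of m] by simp
  qed
  have sk: "sum2 k" using s by (simp add: k_def[abs_def])
  have bound: "norm (G m) \<le> exp (S2 k)" for m
  proof (cases "m \<le> n + 1")
    case True
    have "norm (G m) \<le> exp (sum k {m..<n+1}) * norm (G (n+1))"
      by (rule grow_back[where N="\<lambda>m. norm (G m)", OF st norm_ge_zero k0 True])
    also have "G (n+1) = 1" by (simp add: G_def)
    finally have "norm (G m) \<le> exp (sum k {m..<n+1})" by simp
    also have "\<dots> \<le> exp (S2 k)" using sum2_le_S2[OF sk, of m "n+1"] by simp
    finally show ?thesis .
  next
    case False
    then have "G m = 1" by (simp add: G_def)
    then show ?thesis using S2_nonneg[OF sk] by simp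
  qed
  then show "norm (\<Prod>j\<in>{m..n}. b j) \<le> exp (S2 (\<lambda>n. norm (1 - b n)))"
    by (simp add: G_def k_def[abs_def])
  have d: "norm (G m - G (m+1)) \<le> exp (S2 k) * k m" for m
  proof (cases "m \<le> n")
    case True
    then have "G m - G (m+1) = - ((1 - b m) * G (m+1))" using Grec[of m] by (simp add: algebra_simps)
    then have "norm (G m - G (m+1)) = k m * norm (G (m+1))" by (simp add: norm_mult k_def)
    also have "\<dots> \<le> k m * exp (S2 k)" by (intro mult_left_mono bound k0)
    finally show ?thesis by (simp add: mult.commute)
  next
    case False
    then have "G m = 1" "G (m+1) = 1" using Grec[of m] Grec[of "m+1"] by auto
    then show ?thesis using k0[of m] by simp
  qed
  have "\<exists>L. (G \<longlongrightarrow> L) at_bot" by (rule conv_both(2)[OF sk d])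
  then show "\<exists>L. ((\<lambda>m. \<Prod>j\<in>{m..n}. b j) \<longlongrightarrow> L) at_bot" by (simp add: G_def[abs_def])
qed


lemma tendsto_Lim_bot: "(f \<longlongrightarrow> L) at_bot \<Longrightarrow> Lim at_bot (f::int \<Rightarrow> 'a) = (L::'a::t2_space)"
  by (rule tendsto_Lim) (simp_all add: trivial_limit_at_bot_linorder)

lemma tendsto_Lim_top: "(f \<longlongrightarrow> L) at_top \<Longrightarrow> Lim at_top (f::int \<Rightarrow> 'a) = (L::'a::t2_space)"
  by (rule tendsto_Lim) (simp_all add: trivial_limit_at_top_linorder)

lemma sum2_inv:
  fixes a :: "int \<Rightarrow> complex"
  assumes nz: "\<And>n. a n \<noteq> 0" and s: "sum2 (\<lambda>n. norm (1 - a n))"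
  shows "sum2 (\<lambda>n. norm (1 - inverse (a n)))"
proof -
  have key: "summable (\<lambda>i. norm (1 - inverse (a (h i))))"
    if sh: "summable (\<lambda>i. norm (1 - a (h i)))" for h :: "nat \<Rightarrow> int"
  proof -
    have "(\<lambda>i. norm (1 - a (h i))) \<longlonglongrightarrow> 0" by (rule summable_LIMSEQ_zero[OF sh])
    then have ev: "eventually (\<lambda>i. norm (1 - a (h i)) < 1/2) sequentially"
      by (rule order_tendstoD) simp
    have "eventually (\<lambda>i. norm (norm (1 - inverse (a (h i)))) \<le> 2 * norm (1 - a (h i))) sequentially"
      using ev
    proof eventually_elim
      case (elim i)
      have "1 = norm (a (h i) + (1 - a (h i)))" by simp
      also have "\<dots> \<le> norm (a (h i)) + norm (1 - a (h i))" by (rule norm_triangle_ineq)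
      finally have ge: "1/2 \<le> norm (a (h i))" using elim by simp
      have "1 - inverse (a (h i)) = (a (h i) - 1) / a (h i)" using nz[of "h i"] by (simp add: field_simps)
      then have "norm (1 - inverse (a (h i))) = norm (1 - a (h i)) / norm (a (h i))"
        by (simp add: norm_divide norm_minus_commute)
      also have "\<dots> \<le> norm (1 - a (h i)) / (1/2)"
        by (rule divide_left_mono[OF ge]) (auto simp: nz)
      finally show ?case by simp
    qed
    then show ?thesis by (rule summable_comparison_test_ev) (intro summable_mult sh)
  qed
  have "summable (\<lambda>i. norm (1 - a (int i)))" "summable (\<lambda>i. norm (1 - a (- int i)))"
    using s by (auto simp: sum2_def)
  then show ?thesis using key[of int] key[of "\<lambda>i. - int i"] by (simp add: sum2_def)
qed

lemma prod_main:
  fixes a :: "int \<Rightarrow> complex"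
  assumes nz: "\<And>n. a n \<noteq> 0" and s: "sum2 (\<lambda>n. norm (1 - a n))"
  defines "P \<equiv> (\<lambda>n. Lim at_bot (\<lambda>m. \<Prod>j\<in>{m..n}. a j))"
  shows "\<And>n. ((\<lambda>m. \<Prod>j\<in>{m..n}. a j) \<longlongrightarrow> P n) at_bot"
    and "\<And>n. P n \<noteq> 0"
    and "\<And>n. P n = a n * P (n - 1)"
    and "(P \<longlongrightarrow> 1) at_bot"
    and "(P \<longlongrightarrow> Lim at_top P) at_top"
    and "Lim at_top P \<noteq> 0"
    and "\<exists>C. \<forall>n. norm (P n) \<le> C \<and> norm (inverse (P n)) \<le> C"
proof -
  define S where "S = S2 (\<lambda>n. norm (1 - a n))"
  define S' where "S' = S2 (\<lambda>n. norm (1 - inverse (a n)))"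
  have s': "sum2 (\<lambda>n. norm (1 - inverse (a n)))" by (rule sum2_inv[OF nz s])
  have tP: "((\<lambda>m. \<Prod>j\<in>{m..n}. a j) \<longlongrightarrow> P n) at_bot" for n
  proof -
    obtain L where "((\<lambda>m. \<Prod>j\<in>{m..n}. a j) \<longlongrightarrow> L) at_bot" using prod_tail(2)[OF s] by blast
    then show ?thesis unfolding P_def using tendsto_Lim_bot by metis
  qed
  then show "\<And>n. ((\<lambda>m. \<Prod>j\<in>{m..n}. a j) \<longlongrightarrow> P n) at_bot" .
  have ub: "norm (\<Prod>j\<in>{m..n}. a j) \<le> exp S" for m n using prod_tail(1)[OF s] by (simp add: S_def)
  have lb: "inverse (exp S') \<le> norm (\<Prod>j\<in>{m..n}. a j)" for m n
  proof -
    have "(\<Prod>j\<in>{m..n}. a j) * (\<Prod>j\<in>{m..n}. inverse (a j)) = 1"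
      by (simp add: prod.distrib[symmetric] nz)
    then have xy: "norm (\<Prod>j\<in>{m..n}. a j) * norm (\<Prod>j\<in>{m..n}. inverse (a j)) = 1"
      by (metis norm_mult norm_one)
    have ye: "norm (\<Prod>j\<in>{m..n}. inverse (a j)) \<le> exp S'"
      using prod_tail(1)[OF s'] by (simp add: S'_def)
    have "1 \<le> norm (\<Prod>j\<in>{m..n}. a j) * exp S'"
      using mult_left_mono[OF ye, of "norm (\<Prod>j\<in>{m..n}. a j)"] xy by simp
    then show ?thesis by (simp add: field_simps)
  qed
  have Pub: "norm (P n) \<le> exp S" for n
    by (rule tendsto_upperbound[OF tendsto_norm[OF tP] _ trivial_limit_at_bot_linorder])
       (simp add: ub)
  have Plb: "inverse (exp S') \<le> norm (P n)" for n
    by (rule tendsto_lowerbound[OF tendsto_norm[OF tP] _ trivial_limit_at_bot_linorder])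
       (simp add: lb)
  have Pnz: "P n \<noteq> 0" for n
  proof
    assume "P n = 0" then show False using Plb[of n] by simp
  qed
  then show "\<And>n. P n \<noteq> 0" .
  have Prec: "P n = a n * P (n - 1)" for n
  proof -
    have "((\<lambda>m. a n * (\<Prod>j\<in>{m..n-1}. a j)) \<longlongrightarrow> a n * P (n - 1)) at_bot"
      by (intro tendsto_mult tendsto_const tP)
    moreover have "eventually (\<lambda>m. a n * (\<Prod>j\<in>{m..n-1}. a j) = (\<Prod>j\<in>{m..n}. a j)) at_bot"
      using eventually_le_at_bot[of "n - 1"]
    proof eventually_elim
      case (elim m)
      then have "{m..n} = insert n {m..n-1}" by auto
      then show ?case by simp
    qed
    ultimately have "((\<lambda>m. \<Prod>j\<in>{m..n}. a j) \<longlongrightarrow> a n * P (n - 1)) at_bot"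
      by (rule Lim_transform_eventually)
    then show ?thesis using tP tendsto_unique[OF trivial_limit_at_bot_linorder] by blast
  qed
  then show "\<And>n. P n = a n * P (n - 1)" .
  define k where "k n = norm (1 - a n)" for n
  have sk: "sum2 (\<lambda>n. k (n+1))" using sum2_shift[OF s] by (simp add: k_def[abs_def])
  have dP: "norm (P n - P (n+1)) \<le> exp S * k (n+1)" for n
  proof -
    have "P n - P (n+1) = (1 - a (n+1)) * P n" using Prec[of "n+1"] by (simp add: algebra_simps)
    then have "norm (P n - P (n+1)) = k (n+1) * norm (P n)" by (simp add: norm_mult k_def)
    also have "\<dots> \<le> k (n+1) * exp S" by (intro mult_left_mono Pub) (simp add: k_def)
    finally show ?thesis by (simp add: mult.commute)
  qed
  obtain L where L: "(P \<longlongrightarrow> L) at_bot" using conv_both(2)[OF sk dP] by blast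
  obtain Li where Li: "(P \<longlongrightarrow> Li) at_top" using conv_both(1)[OF sk dP] by blast
  have split: "P 0 = P n * (\<Prod>j\<in>{n+1..0}. a j)" if "n < 0" for n
  proof -
    have "((\<lambda>m. (\<Prod>j\<in>{m..n}. a j) * (\<Prod>j\<in>{n+1..0}. a j)) \<longlongrightarrow> P n * (\<Prod>j\<in>{n+1..0}. a j)) at_bot"
      by (intro tendsto_mult tendsto_const tP)
    moreover have "eventually (\<lambda>m. (\<Prod>j\<in>{m..n}. a j) * (\<Prod>j\<in>{n+1..0}. a j) = (\<Prod>j\<in>{m..0}. a j)) at_bot"
      using eventually_le_at_bot[of n]
    proof eventually_elim
      case (elim m)
      then have "{m..0} = {m..n} \<union> {n+1..0}" using that by auto
      moreover have "{m..n} \<inter> {n+1..0} = {}" by auto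
      ultimately show ?case by (simp add: prod.union_disjoint)
    qed
    ultimately have "((\<lambda>m. \<Prod>j\<in>{m..0}. a j) \<longlongrightarrow> P n * (\<Prod>j\<in>{n+1..0}. a j)) at_bot"
      by (rule Lim_transform_eventually)
    then show ?thesis using tP tendsto_unique[OF trivial_limit_at_bot_linorder] by blast
  qed
  have l1: "((\<lambda>n. P n * (\<Prod>j\<in>{n+1..0}. a j)) \<longlongrightarrow> L * P 0) at_bot"
    by (intro tendsto_mult L tendsto_shift_bot[where f="\<lambda>m. \<Prod>j\<in>{m..0}. a j"] tP)
  have ev: "eventually (\<lambda>n. P 0 = P n * (\<Prod>j\<in>{n+1..0}. a j)) at_bot"
    using eventually_le_at_bot[of "-1"] by eventually_elim (rule split, simp)
  have l2: "((\<lambda>n. P n * (\<Prod>j\<in>{n+1..0}. a j)) \<longlongrightarrow> P 0) at_bot"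
    by (rule Lim_transform_eventually[OF tendsto_const ev])
  have "L * P 0 = P 0" by (rule tendsto_unique[OF trivial_limit_at_bot_linorder l1 l2])
  then have "L = 1" using Pnz[of 0] by simp
  then show "(P \<longlongrightarrow> 1) at_bot" using L by simp
  show "(P \<longlongrightarrow> Lim at_top P) at_top" unfolding tendsto_Lim_top[OF Li] by (rule Li)
  have "inverse (exp S') \<le> norm Li"
    by (rule tendsto_lowerbound[OF tendsto_norm[OF Li] _ trivial_limit_at_top_linorder])
       (simp add: Plb)
  then show "Lim at_top P \<noteq> 0" using tendsto_Lim_top[OF Li] by auto
  have Pinv: "norm (inverse (P n)) \<le> exp S'" for n
  proof -
    have "0 < inverse (exp S')" by simp
    have "norm (inverse (P n)) = inverse (norm (P n))" by (rule norm_inverse)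
    also have "\<dots> \<le> inverse (inverse (exp S'))"
      by (rule le_imp_inverse_le[OF Plb]) simp
    finally show ?thesis by simp
  qed
  have "norm (P n) \<le> max (exp S) (exp S') \<and> norm (inverse (P n)) \<le> max (exp S) (exp S')" for n
    using order.trans[OF Pub[of n] max.cobounded1] order.trans[OF Pinv[of n] max.cobounded2] by blast
  then show "\<exists>C. \<forall>n. norm (P n) \<le> C \<and> norm (inverse (P n)) \<le> C" by blast
qed


definition Aof :: "complex \<Rightarrow> (int \<Rightarrow> complex \<times> complex) \<Rightarrow> int \<Rightarrow> complex" where
  "Aof z X n = fst (X n) * z powi n"
definition Bof :: "complex \<Rightarrow> (int \<Rightarrow> complex \<times> complex) \<Rightarrow> int \<Rightarrow> complex" where
  "Bof z X n = snd (X n) * z powi (- n)"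
definition kq :: "(int \<Rightarrow> complex) \<Rightarrow> (int \<Rightarrow> complex) \<Rightarrow> int \<Rightarrow> real" where
  "kq q r n = 2 * norm (q n) + norm (r n) + 2 * norm (q n) * norm (r n)"
definition NX :: "(int \<Rightarrow> complex \<times> complex) \<Rightarrow> int \<Rightarrow> real" where
  "NX X n = norm (fst (X n)) + norm (snd (X n))"

lemma z_facts:
  assumes "norm (z::complex) = 1"
  shows "z \<noteq> 0" "norm (inverse z) = 1" "norm (z - inverse z) \<le> 2" "\<And>n. norm (z powi n) = 1"
proof -
  show "z \<noteq> 0" using assms by auto
  show ni: "norm (inverse z) = 1" using assms by (simp add: norm_inverse)
  have "norm (z - inverse z) \<le> norm z + norm (inverse z)" by (rule norm_triangle_ineq4)
  then show "norm (z - inverse z) \<le> 2" using assms ni by simp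
  show "\<And>n. norm (z powi n) = 1" using assms by (simp add: norm_power_int)
qed

lemma solvesQ_iff:
  "solves (sysQ q r) z X \<longleftrightarrow> (\<forall>n. fst (X n) = z * fst (X (n+1)) + (z - inverse z) * q n * snd (X (n+1)) \<and>
      snd (X n) = z * r n * fst (X (n+1)) + (inverse z + (z - inverse z) * q n * r n) * snd (X (n+1)))"
  by (simp add: solves_def sysQ_def)

lemma kq_nonneg: "0 \<le> kq q r n" by (simp add: kq_def)

context
  fixes q r :: "int \<Rightarrow> complex" and z :: complex and X :: "int \<Rightarrow> complex \<times> complex"
  assumes z1: "norm z = 1" and sol: "solves (sysQ q r) z X"
begin

private abbreviation "w \<equiv> z - inverse z"

lemma Q_eqs:
  "fst (X n) = z * fst (X (n+1)) + w * q n * snd (X (n+1))"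
  "snd (X n) = z * r n * fst (X (n+1)) + (inverse z + w * q n * r n) * snd (X (n+1))"
  using sol unfolding solvesQ_iff by blast+

lemma Q_inv_eqs:
  "fst (X (n+1)) = (inverse z + w * q n * r n) * fst (X n) - w * q n * snd (X n)"
  "snd (X (n+1)) = - z * r n * fst (X n) + z * snd (X n)"
proof -
  have z0: "z \<noteq> 0" using z_facts[OF z1] by simp
  show "fst (X (n+1)) = (inverse z + w * q n * r n) * fst (X n) - w * q n * snd (X n)"
    unfolding Q_eqs[of n] using z0 by (simp add: field_simps)
  show "snd (X (n+1)) = - z * r n * fst (X n) + z * snd (X n)"
    unfolding Q_eqs[of n] using z0 by (simp add: field_simps)
qed

lemma Q_step_back: "NX X n \<le> (1 + kq q r n) * NX X (n+1)"
proof -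
  let ?a = "norm (fst (X (n+1)))" and ?b = "norm (snd (X (n+1)))"
  let ?q = "norm (q n)" and ?r = "norm (r n)"
  have w2: "norm w \<le> 2" and zi: "norm (inverse z) = 1" using z_facts[OF z1] by auto
  have h1: "norm (fst (X n)) \<le> ?a + 2 * ?q * ?b"
  proof -
    have "norm (fst (X n)) \<le> norm (z * fst (X (n+1))) + norm (w * q n * snd (X (n+1)))"
      unfolding Q_eqs[of n] by (rule norm_triangle_ineq)
    also have "norm (z * fst (X (n+1))) = ?a" using z1 by (simp add: norm_mult)
    also have "norm (w * q n * snd (X (n+1))) = norm w * ?q * ?b" by (simp add: norm_mult)
    also have "\<dots> \<le> 2 * ?q * ?b" by (intro mult_right_mono w2) auto
    finally show ?thesis by simp
  qed
  have h2: "norm (snd (X n)) \<le> ?r * ?a + (1 + 2 * ?q * ?r) * ?b"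
  proof -
    have "norm (snd (X n)) \<le> norm (z * r n * fst (X (n+1))) + norm ((inverse z + w * q n * r n) * snd (X (n+1)))"
      unfolding Q_eqs[of n] by (rule norm_triangle_ineq)
    also have "norm (z * r n * fst (X (n+1))) = ?r * ?a" using z1 by (simp add: norm_mult)
    also have "norm ((inverse z + w * q n * r n) * snd (X (n+1))) \<le> (1 + 2 * ?q * ?r) * ?b"
    proof -
      have "norm (inverse z + w * q n * r n) \<le> norm (inverse z) + norm (w * q n * r n)" by (rule norm_triangle_ineq)
      also have "norm (w * q n * r n) = norm w * (?q * ?r)" by (simp add: norm_mult)
      also have "norm w * (?q * ?r) \<le> 2 * (?q * ?r)" by (intro mult_right_mono w2) auto
      finally have "norm (inverse z + w * q n * r n) \<le> 1 + 2 * ?q * ?r" using zi by simp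
      from mult_right_mono[OF this norm_ge_zero] show ?thesis by (simp add: norm_mult)
    qed
    finally show ?thesis by simp
  qed
  have c1: "1 + ?r \<le> 1 + kq q r n" and c2: "1 + 2 * ?q + 2 * ?q * ?r \<le> 1 + kq q r n"
    by (auto simp: kq_def)
  have "NX X n \<le> (1 + ?r) * ?a + (1 + 2 * ?q + 2 * ?q * ?r) * ?b"
    using h1 h2 by (simp add: NX_def algebra_simps)
  also have "\<dots> \<le> (1 + kq q r n) * ?a + (1 + kq q r n) * ?b"
    using mult_right_mono[OF c1, of ?a] mult_right_mono[OF c2, of ?b] by simp
  finally show ?thesis by (simp add: NX_def algebra_simps)
qed

lemma Q_step_fwd: "NX X (n+1) \<le> (1 + kq q r n) * NX X n"
proof -
  let ?a = "norm (fst (X n))" and ?b = "norm (snd (X n))"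
  let ?q = "norm (q n)" and ?r = "norm (r n)"
  have w2: "norm w \<le> 2" and zi: "norm (inverse z) = 1" using z_facts[OF z1] by auto
  have h1: "norm (fst (X (n+1))) \<le> (1 + 2 * ?q * ?r) * ?a + 2 * ?q * ?b"
  proof -
    have "norm (fst (X (n+1))) \<le> norm ((inverse z + w * q n * r n) * fst (X n)) + norm (w * q n * snd (X n))"
      unfolding Q_inv_eqs[of n] by (rule norm_triangle_ineq4)
    also have "norm (w * q n * snd (X n)) = norm w * ?q * ?b" by (simp add: norm_mult)
    also have "\<dots> \<le> 2 * ?q * ?b" by (intro mult_right_mono w2) auto
    also have "norm ((inverse z + w * q n * r n) * fst (X n)) \<le> (1 + 2 * ?q * ?r) * ?a"
    proof -
      have "norm (inverse z + w * q n * r n) \<le> norm (inverse z) + norm (w * q n * r n)" by (rule norm_triangle_ineq)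
      also have "norm (w * q n * r n) = norm w * (?q * ?r)" by (simp add: norm_mult)
      also have "norm w * (?q * ?r) \<le> 2 * (?q * ?r)" by (intro mult_right_mono w2) auto
      finally have "norm (inverse z + w * q n * r n) \<le> 1 + 2 * ?q * ?r" using zi by simp
      from mult_right_mono[OF this norm_ge_zero] show ?thesis by (simp add: norm_mult)
    qed
    finally show ?thesis by simp
  qed
  have h2: "norm (snd (X (n+1))) \<le> ?r * ?a + ?b"
  proof -
    have "norm (snd (X (n+1))) \<le> norm (- z * r n * fst (X n)) + norm (z * snd (X n))"
      unfolding Q_inv_eqs[of n] by (rule norm_triangle_ineq)
    then show ?thesis using z1 by (simp add: norm_mult)
  qed
  have c1: "1 + 2 * ?q * ?r + ?r \<le> 1 + kq q r n" and c2: "1 + 2 * ?q \<le> 1 + kq q r n"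
    by (auto simp: kq_def)
  have "NX X (n+1) \<le> (1 + 2 * ?q * ?r + ?r) * ?a + (1 + 2 * ?q) * ?b"
    using h1 h2 by (simp add: NX_def algebra_simps)
  also have "\<dots> \<le> (1 + kq q r n) * ?a + (1 + kq q r n) * ?b"
    using mult_right_mono[OF c1, of ?a] mult_right_mono[OF c2, of ?b] by simp
  finally show ?thesis by (simp add: NX_def algebra_simps)
qed

lemma Q_diffA: "norm (Aof z X n - Aof z X (n+1)) \<le> kq q r n * NX X (n+1)"
proof -
  have z0: "z \<noteq> 0" and w2: "norm w \<le> 2" and zp: "\<And>n. norm (z powi n) = 1" using z_facts[OF z1] by auto
  have e: "z powi (n+1) = z powi n * z" by (rule power_int_add_1) (use z0 in simp)
  have "Aof z X n - Aof z X (n+1) = fst (X n) * z powi n - fst (X (n+1)) * (z powi n * z)"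
    by (simp only: Aof_def e)
  also have "\<dots> = z powi n * (w * q n * snd (X (n+1)))"
    by (subst Q_eqs(1)[of n]) (simp add: algebra_simps)
  finally have "Aof z X n - Aof z X (n+1) = z powi n * (w * q n * snd (X (n+1)))" .
  then have "norm (Aof z X n - Aof z X (n+1)) = norm w * norm (q n) * norm (snd (X (n+1)))"
    by (simp add: norm_mult zp)
  also have "\<dots> \<le> 2 * norm (q n) * norm (snd (X (n+1)))"
    by (intro mult_right_mono w2) auto
  also have "\<dots> \<le> kq q r n * NX X (n+1)"
    by (intro mult_mono) (auto simp: kq_def NX_def)
  finally show ?thesis .
qed

lemma Q_diffB: "norm (Bof z X n - Bof z X (n+1)) \<le> kq q r n * NX X (n+1)"
proof -
  have z0: "z \<noteq> 0" and w2: "norm w \<le> 2" and zp: "\<And>n. norm (z powi n) = 1" using z_facts[OF z1] by auto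
  have e1: "z powi (n+1) = z powi n * z" by (rule power_int_add_1) (use z0 in simp)
  have "z powi (- (n + 1)) = inverse (z powi (n+1))" by (rule power_int_minus)
  also have "\<dots> = inverse (z powi n * z)" by (simp only: e1)
  also have "\<dots> = inverse (z powi n) * inverse z" by (rule inverse_mult_distrib)
  also have "inverse (z powi n) = z powi (-n)" by (rule power_int_minus[symmetric])
  finally have e: "z powi (- (n + 1)) = z powi (-n) * inverse z" .
  have "Bof z X n - Bof z X (n+1) = snd (X n) * z powi (-n) - snd (X (n+1)) * (z powi (-n) * inverse z)"
    by (simp only: Bof_def e)
  also have "\<dots> = z powi (-n) * (z * r n * fst (X (n+1)) + w * q n * r n * snd (X (n+1)))"
    using z0 by (subst Q_eqs(2)[of n]) (simp add: algebra_simps)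
  finally have "Bof z X n - Bof z X (n+1) = z powi (-n) * (z * r n * fst (X (n+1)) + w * q n * r n * snd (X (n+1)))" .
  then have "norm (Bof z X n - Bof z X (n+1)) = norm (z * r n * fst (X (n+1)) + w * q n * r n * snd (X (n+1)))"
    by (simp add: norm_mult zp)
  also have "\<dots> \<le> norm (z * r n * fst (X (n+1))) + norm (w * q n * r n * snd (X (n+1)))"
    by (rule norm_triangle_ineq)
  also have "\<dots> = norm (r n) * norm (fst (X (n+1))) + norm w * (norm (q n) * norm (r n)) * norm (snd (X (n+1)))"
    using z1 by (simp add: norm_mult)
  also have "\<dots> \<le> norm (r n) * norm (fst (X (n+1))) + 2 * (norm (q n) * norm (r n)) * norm (snd (X (n+1)))"
    by (rule add_left_mono, rule mult_right_mono, rule mult_right_mono[OF w2]) auto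
  also have "\<dots> \<le> kq q r n * norm (fst (X (n+1))) + kq q r n * norm (snd (X (n+1)))"
  proof -
    have c1: "norm (r n) \<le> kq q r n" and c2: "2 * (norm (q n) * norm (r n)) \<le> kq q r n"
      by (auto simp: kq_def)
    show ?thesis by (rule add_mono[OF mult_right_mono[OF c1 norm_ge_zero] mult_right_mono[OF c2 norm_ge_zero]])
  qed
  finally show ?thesis by (simp add: NX_def algebra_simps)
qed

end


lemma NX_AB: "norm z = 1 \<Longrightarrow> NX X n = norm (Aof z X n) + norm (Bof z X n)"
  by (simp add: NX_def Aof_def Bof_def norm_mult z_facts)

lemma NX_nonneg: "0 \<le> NX X n" by (simp add: NX_def)

context
  fixes q r :: "int \<Rightarrow> complex" and z :: complex
  assumes z1: "norm z = 1" and sk: "sum2 (kq q r)"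
begin

lemma Q_bound: "solves (sysQ q r) z X \<Longrightarrow> NX X n \<le> exp (S2 (kq q r)) * NX X 0"
  by (rule bounded_both[OF sk Q_step_back[OF z1] Q_step_fwd[OF z1] NX_nonneg])

lemma Q_conv:
  assumes sol: "solves (sysQ q r) z X"
  shows "\<exists>a. (Aof z X \<longlongrightarrow> a) at_top" "\<exists>a. (Aof z X \<longlongrightarrow> a) at_bot"
    "\<exists>a. (Bof z X \<longlongrightarrow> a) at_top" "\<exists>a. (Bof z X \<longlongrightarrow> a) at_bot"
proof -
  define B where "B = exp (S2 (kq q r)) * NX X 0"
  have dA: "norm (Aof z X n - Aof z X (n+1)) \<le> B * kq q r n" for n
  proof -
    have "norm (Aof z X n - Aof z X (n+1)) \<le> kq q r n * NX X (n+1)" by (rule Q_diffA[OF z1 sol])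
    also have "\<dots> \<le> kq q r n * B" unfolding B_def by (intro mult_left_mono Q_bound[OF sol] kq_nonneg)
    finally show ?thesis by (simp add: mult.commute)
  qed
  have dB: "norm (Bof z X n - Bof z X (n+1)) \<le> B * kq q r n" for n
  proof -
    have "norm (Bof z X n - Bof z X (n+1)) \<le> kq q r n * NX X (n+1)" by (rule Q_diffB[OF z1 sol])
    also have "\<dots> \<le> kq q r n * B" unfolding B_def by (intro mult_left_mono Q_bound[OF sol] kq_nonneg)
    finally show ?thesis by (simp add: mult.commute)
  qed
  show "\<exists>a. (Aof z X \<longlongrightarrow> a) at_top" "\<exists>a. (Aof z X \<longlongrightarrow> a) at_bot"
    using conv_both[OF sk dA] by auto
  show "\<exists>a. (Bof z X \<longlongrightarrow> a) at_top" "\<exists>a. (Bof z X \<longlongrightarrow> a) at_bot"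
    using conv_both[OF sk dB] by auto
qed

lemma NX_tendsto0:
  assumes "(Aof z X \<longlongrightarrow> 0) F" "(Bof z X \<longlongrightarrow> 0) F"
  shows "(NX X \<longlongrightarrow> 0) F"
proof -
  have "((\<lambda>n. norm (Aof z X n) + norm (Bof z X n)) \<longlongrightarrow> norm (0::complex) + norm (0::complex)) F"
    by (intro tendsto_add tendsto_norm assms)
  moreover have "NX X = (\<lambda>n. norm (Aof z X n) + norm (Bof z X n))" by (rule ext) (simp add: NX_AB[OF z1])
  ultimately show ?thesis by simp
qed

lemma X_zero_of_NX: "NX X n \<le> 0 \<Longrightarrow> X n = (0, 0)"
  by (simp add: NX_def prod_eq_iff) (smt (verit) norm_ge_zero norm_eq_zero)

lemma Q_zero_top:
  assumes sol: "solves (sysQ q r) z X" and "(Aof z X \<longlongrightarrow> 0) at_top" "(Bof z X \<longlongrightarrow> 0) at_top"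
  shows "X n = (0, 0)"
proof -
  have t: "(NX X \<longlongrightarrow> 0) at_top" by (rule NX_tendsto0[OF assms(2,3)])
  have t2: "((\<lambda>m. exp (S2 (kq q r)) * NX X m) \<longlongrightarrow> exp (S2 (kq q r)) * 0) at_top"
    by (intro tendsto_mult tendsto_const t)
  have ev: "eventually (\<lambda>m. NX X n \<le> exp (S2 (kq q r)) * NX X m) at_top"
    using eventually_ge_at_top[of n]
  proof eventually_elim
    case (elim m)
    have "NX X n \<le> exp (sum (kq q r) {n..<m}) * NX X m"
      by (rule grow_back[where N="NX X" and k="kq q r", OF Q_step_back[OF z1 sol] NX_nonneg kq_nonneg elim])
    also have "\<dots> \<le> exp (S2 (kq q r)) * NX X m"
      by (intro mult_right_mono NX_nonneg) (simp add: sum2_le_S2[OF sk])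
    finally show ?case .
  qed
  have "NX X n \<le> exp (S2 (kq q r)) * 0"
    by (rule tendsto_le[OF trivial_limit_at_top_linorder t2 tendsto_const ev])
  then show ?thesis by (intro X_zero_of_NX) simp
qed

lemma Q_zero_bot:
  assumes sol: "solves (sysQ q r) z X" and "(Aof z X \<longlongrightarrow> 0) at_bot" "(Bof z X \<longlongrightarrow> 0) at_bot"
  shows "X n = (0, 0)"
proof -
  have t: "(NX X \<longlongrightarrow> 0) at_bot" by (rule NX_tendsto0[OF assms(2,3)])
  have t2: "((\<lambda>m. exp (S2 (kq q r)) * NX X m) \<longlongrightarrow> exp (S2 (kq q r)) * 0) at_bot"
    by (intro tendsto_mult tendsto_const t)
  have ev: "eventually (\<lambda>m. NX X n \<le> exp (S2 (kq q r)) * NX X m) at_bot"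
    using eventually_le_at_bot[of n]
  proof eventually_elim
    case (elim m)
    have "NX X n \<le> exp (sum (kq q r) {m..<n}) * NX X m"
      by (rule grow_fwd[where N="NX X" and k="kq q r", OF Q_step_fwd[OF z1 sol] NX_nonneg kq_nonneg elim])
    also have "\<dots> \<le> exp (S2 (kq q r)) * NX X m"
      by (intro mult_right_mono NX_nonneg) (simp add: sum2_le_S2[OF sk])
    finally show ?case .
  qed
  have "NX X n \<le> exp (S2 (kq q r)) * 0"
    by (rule tendsto_le[OF trivial_limit_at_bot_linorder t2 tendsto_const ev])
  then show ?thesis by (intro X_zero_of_NX) simp
qed

end


definition stepQ :: "(int \<Rightarrow> complex) \<Rightarrow> (int \<Rightarrow> complex) \<Rightarrow> complex \<Rightarrow> int \<Rightarrow> complex \<times> complex \<Rightarrow> complex \<times> complex" where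
  "stepQ q r z n v = (z * fst v + (z - inverse z) * q n * snd v,
     z * r n * fst v + (inverse z + (z - inverse z) * q n * r n) * snd v)"
definition istepQ :: "(int \<Rightarrow> complex) \<Rightarrow> (int \<Rightarrow> complex) \<Rightarrow> complex \<Rightarrow> int \<Rightarrow> complex \<times> complex \<Rightarrow> complex \<times> complex" where
  "istepQ q r z n v = ((inverse z + (z - inverse z) * q n * r n) * fst v - (z - inverse z) * q n * snd v,
     - z * r n * fst v + z * snd v)"

lemma step_istep: "z \<noteq> 0 \<Longrightarrow> stepQ q r z n (istepQ q r z n v) = v"
  by (simp add: stepQ_def istepQ_def prod_eq_iff field_simps)

primrec fwdQ :: "(int \<Rightarrow> complex) \<Rightarrow> (int \<Rightarrow> complex) \<Rightarrow> complex \<Rightarrow> complex \<times> complex \<Rightarrow> nat \<Rightarrow> complex \<times> complex" where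
  "fwdQ q r z c 0 = c"
| "fwdQ q r z c (Suc i) = istepQ q r z (int i) (fwdQ q r z c i)"

primrec bwdQ :: "(int \<Rightarrow> complex) \<Rightarrow> (int \<Rightarrow> complex) \<Rightarrow> complex \<Rightarrow> complex \<times> complex \<Rightarrow> nat \<Rightarrow> complex \<times> complex" where
  "bwdQ q r z c 0 = c"
| "bwdQ q r z c (Suc i) = stepQ q r z (- int i - 1) (bwdQ q r z c i)"

definition solQ :: "(int \<Rightarrow> complex) \<Rightarrow> (int \<Rightarrow> complex) \<Rightarrow> complex \<Rightarrow> complex \<times> complex \<Rightarrow> int \<Rightarrow> complex \<times> complex" where
  "solQ q r z c n = (if 0 \<le> n then fwdQ q r z c (nat n) else bwdQ q r z c (nat (- n)))"

lemma solves_step: "solves (sysQ q r) z X \<longleftrightarrow> (\<forall>n. X n = stepQ q r z n (X (n+1)))"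
  by (simp add: solves_def sysQ_def stepQ_def prod_eq_iff)

lemma solQ_0: "solQ q r z c 0 = c" by (simp add: solQ_def)

lemma solQ_solves:
  assumes z0: "z \<noteq> 0" shows "solves (sysQ q r) z (solQ q r z c)"
  unfolding solves_step
proof
  fix n :: int
  show "solQ q r z c n = stepQ q r z n (solQ q r z c (n + 1))"
  proof (cases "0 \<le> n")
    case True
    have "nat (n+1) = Suc (nat n)" using True by simp
    then have "solQ q r z c (n+1) = istepQ q r z n (solQ q r z c n)"
      using True by (simp add: solQ_def)
    then show ?thesis using step_istep[OF z0] by simp
  next
    case False
    have e1: "nat (- n) = Suc (nat (- n - 1))" using False by simp
    have e2: "- int (nat (- n - 1)) - 1 = n" using False by simp
    have "solQ q r z c n = stepQ q r z n (bwdQ q r z c (nat (- n - 1)))"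
      using False by (simp add: solQ_def e1 e2 del: bwdQ.simps(2)) (simp add: e2)
    moreover have "solQ q r z c (n+1) = bwdQ q r z c (nat (- n - 1))"
    proof (cases "n = -1")
      case True then show ?thesis by (simp add: solQ_def)
    next
      case False
      then have "\<not> 0 \<le> n + 1" "nat (- (n+1)) = nat (- n - 1)" using \<open>\<not> 0 \<le> n\<close> by auto
      then show ?thesis by (simp add: solQ_def)
    qed
    ultimately show ?thesis by simp
  qed
qed

definition lc :: "complex \<Rightarrow> complex \<Rightarrow> (int \<Rightarrow> complex \<times> complex) \<Rightarrow> (int \<Rightarrow> complex \<times> complex) \<Rightarrow> int \<Rightarrow> complex \<times> complex" where
  "lc a b X Y n = (a * fst (X n) + b * fst (Y n), a * snd (X n) + b * snd (Y n))"

lemma solves_lc: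
  assumes "solves M z X" "solves M z Y" shows "solves M z (lc a b X Y)"
  unfolding solves_def
proof
  fix n
  obtain a1 b1 c1 d1 where M: "M n z = (a1, b1, c1, d1)" by (cases "M n z") auto
  have "fst (X n) = a1 * fst (X (n+1)) + b1 * snd (X (n+1)) \<and> snd (X n) = c1 * fst (X (n+1)) + d1 * snd (X (n+1))"
    using assms(1) unfolding solves_def by (metis (mono_tags, lifting) M case_prod_conv)
  moreover have "fst (Y n) = a1 * fst (Y (n+1)) + b1 * snd (Y (n+1)) \<and> snd (Y n) = c1 * fst (Y (n+1)) + d1 * snd (Y (n+1))"
    using assms(2) unfolding solves_def by (metis (mono_tags, lifting) M case_prod_conv)
  ultimately show "case M n z of (a', b', c', d') \<Rightarrow>
      fst (lc a b X Y n) = a' * fst (lc a b X Y (n + 1)) + b' * snd (lc a b X Y (n + 1)) \<and>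
      snd (lc a b X Y n) = c' * fst (lc a b X Y (n + 1)) + d' * snd (lc a b X Y (n + 1))"
    by (simp add: M lc_def algebra_simps)
qed

lemma Aof_lc: "Aof z (lc a b X Y) n = a * Aof z X n + b * Aof z Y n"
  by (simp add: Aof_def lc_def algebra_simps)
lemma Bof_lc: "Bof z (lc a b X Y) n = a * Bof z X n + b * Bof z Y n"
  by (simp add: Bof_def lc_def algebra_simps)

lemma surj_gen:
  fixes F :: "int filter"
  assumes Fnb: "F \<noteq> bot"
    and conv: "\<And>X. solves M z X \<Longrightarrow> (\<exists>a. (Aof z X \<longlongrightarrow> a) F) \<and> (\<exists>b. (Bof z X \<longlongrightarrow> b) F)"
    and zero: "\<And>X. solves M z X \<Longrightarrow> (Aof z X \<longlongrightarrow> 0) F \<Longrightarrow> (Bof z X \<longlongrightarrow> 0) F \<Longrightarrow> X 0 = (0, 0)"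
    and ex: "\<And>c. \<exists>X. solves M z X \<and> X 0 = c"
  shows "\<exists>X. solves M z X \<and> (Aof z X \<longlongrightarrow> c1) F \<and> (Bof z X \<longlongrightarrow> c2) F"
proof -
  obtain X1 where X1: "solves M z X1" "X1 0 = (1, 0)" using ex by blast
  obtain X2 where X2: "solves M z X2" "X2 0 = (0, 1)" using ex by blast
  obtain x1 y1 where l1: "(Aof z X1 \<longlongrightarrow> x1) F" "(Bof z X1 \<longlongrightarrow> y1) F" using conv[OF X1(1)] by blast
  obtain x2 y2 where l2: "(Aof z X2 \<longlongrightarrow> x2) F" "(Bof z X2 \<longlongrightarrow> y2) F" using conv[OF X2(1)] by blast
  have lim: "(Aof z (lc a b X1 X2) \<longlongrightarrow> a * x1 + b * x2) F \<and> (Bof z (lc a b X1 X2) \<longlongrightarrow> a * y1 + b * y2) F" for a b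
    unfolding Aof_lc[abs_def] Bof_lc[abs_def] by (intro conjI tendsto_add tendsto_mult tendsto_const l1 l2)
  have at0: "lc a b X1 X2 0 = (a, b)" for a b using X1(2) X2(2) by (simp add: lc_def)
  define d where "d = x1 * y2 - x2 * y1"
  have "d \<noteq> 0"
  proof
    assume d0: "d = 0"
    have "\<exists>a b. (a, b) \<noteq> (0, 0) \<and> a * x1 + b * x2 = 0 \<and> a * y1 + b * y2 = 0"
    proof (cases "(y1, y2) \<noteq> (0, 0)")
      case True
      then show ?thesis using d0 by (intro exI[of _ y2] exI[of _ "- y1"]) (auto simp: d_def algebra_simps)
    next
      case False
      then have y: "y1 = 0" "y2 = 0" by auto
      show ?thesis
      proof (cases "(x1, x2) \<noteq> (0, 0)")
        case True
        then show ?thesis using y by (intro exI[of _ x2] exI[of _ "- x1"]) (auto simp: algebra_simps)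
      next
        case False
        then show ?thesis using y by (intro exI[of _ 1] exI[of _ 0]) auto
      qed
    qed
    then obtain a b where ab: "(a, b) \<noteq> (0, 0)" "a * x1 + b * x2 = 0" "a * y1 + b * y2 = 0" by blast
    have "solves M z (lc a b X1 X2)" by (rule solves_lc[OF X1(1) X2(1)])
    moreover have "(Aof z (lc a b X1 X2) \<longlongrightarrow> 0) F" "(Bof z (lc a b X1 X2) \<longlongrightarrow> 0) F"
      using lim[of a b] ab by auto
    ultimately have "lc a b X1 X2 0 = (0, 0)" by (rule zero)
    then show False using at0 ab(1) by simp
  qed
  define a where "a = (c1 * y2 - x2 * c2) / d"
  define b where "b = (x1 * c2 - c1 * y1) / d"
  have "a * x1 + b * x2 = ((c1 * y2 - x2 * c2) * x1 + (x1 * c2 - c1 * y1) * x2) / d"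
    by (simp add: a_def b_def add_divide_distrib)
  also have "(c1 * y2 - x2 * c2) * x1 + (x1 * c2 - c1 * y1) * x2 = c1 * d" by (simp add: d_def algebra_simps)
  finally have e1: "a * x1 + b * x2 = c1" using \<open>d \<noteq> 0\<close> by simp
  have "a * y1 + b * y2 = ((c1 * y2 - x2 * c2) * y1 + (x1 * c2 - c1 * y1) * y2) / d"
    by (simp add: a_def b_def add_divide_distrib)
  also have "(c1 * y2 - x2 * c2) * y1 + (x1 * c2 - c1 * y1) * y2 = c2 * d" by (simp add: d_def algebra_simps)
  finally have e2: "a * y1 + b * y2 = c2" using \<open>d \<noteq> 0\<close> by simp
  note e1 e2
  then show ?thesis using lim[of a b] solves_lc[OF X1(1) X2(1)] by metis
qed


lemma filterlim_int_seq: "filterlim (\<lambda>i::nat. int i) at_top sequentially"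
  unfolding filterlim_at_top
proof
  fix Z :: int
  show "eventually (\<lambda>i. Z \<le> int i) sequentially"
    using eventually_ge_at_top[of "nat Z"] by eventually_elim simp
qed

lemma filterlim_negint_seq: "filterlim (\<lambda>i::nat. - int i) at_bot sequentially"
  unfolding filterlim_at_bot
proof
  fix Z :: int
  show "eventually (\<lambda>i. - int i \<le> Z) sequentially"
    using eventually_ge_at_top[of "nat (- Z)"] by eventually_elim simp
qed

lemma sum2_add: "sum2 a \<Longrightarrow> sum2 b \<Longrightarrow> sum2 (\<lambda>n. a n + b n)"
  by (auto simp: sum2_def intro: summable_add)

lemma sum2_cmult: "0 \<le> c \<Longrightarrow> sum2 a \<Longrightarrow> sum2 (\<lambda>n. c * a n)"
  by (auto simp: sum2_def intro: summable_mult)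

lemma sum2_mult_zero:
  fixes a b :: "int \<Rightarrow> real"
  assumes a: "sum2 a" and b0: "\<And>n. 0 \<le> b n" and bt: "(b \<longlongrightarrow> 0) at_top" and bb: "(b \<longlongrightarrow> 0) at_bot"
  shows "sum2 (\<lambda>n. a n * b n)"
proof -
  have a0: "\<And>n. 0 \<le> a n" using a by (simp add: sum2_def)
  have key: "summable (\<lambda>i. a (h i) * b (h i))"
    if sh: "summable (\<lambda>i. a (h i))" and hb: "((\<lambda>i. b (h i)) \<longlonglongrightarrow> 0)" for h :: "nat \<Rightarrow> int"
  proof (rule summable_comparison_test_ev[OF _ sh])
    have "eventually (\<lambda>i. b (h i) < 1) sequentially" by (rule order_tendstoD(2)[OF hb]) simp
    then show "eventually (\<lambda>i. norm (a (h i) * b (h i)) \<le> a (h i)) sequentially"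
    proof eventually_elim
      case (elim i)
      have "norm (a (h i) * b (h i)) = a (h i) * b (h i)" using a0 b0 by simp
      also have "\<dots> \<le> a (h i) * 1" using elim a0[of "h i"] by (intro mult_left_mono) auto
      finally show ?case by simp
    qed
  qed
  have "summable (\<lambda>i. a (int i) * b (int i))"
    using a by (intro key filterlim_compose[OF bt filterlim_int_seq]) (simp add: sum2_def)
  moreover have "summable (\<lambda>i. a (- int i) * b (- int i))"
    using a by (intro key filterlim_compose[OF bb filterlim_negint_seq]) (simp add: sum2_def)
  ultimately show ?thesis using a0 b0 by (simp add: sum2_def)
qed

lemma rapid_zero:
  assumes "rapid_decay f"
  shows "(f \<longlongrightarrow> 0) at_top" "(f \<longlongrightarrow> 0) at_bot"
proof -
  have "((\<lambda>n. real_of_int \<bar>n\<bar> ^ 0 * norm (f n)) \<longlongrightarrow> 0) at_top"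
       "((\<lambda>n. real_of_int \<bar>n\<bar> ^ 0 * norm (f n)) \<longlongrightarrow> 0) at_bot"
    using assms unfolding rapid_decay_def by blast+
  then show "(f \<longlongrightarrow> 0) at_top" "(f \<longlongrightarrow> 0) at_bot"
    by (simp_all add: tendsto_norm_zero_iff)
qed

lemma rapid_sum2:
  assumes "rapid_decay f"
  shows "sum2 (\<lambda>n. norm (f n))"
proof -
  have t: "((\<lambda>n. real_of_int \<bar>n\<bar> ^ 2 * norm (f n)) \<longlongrightarrow> 0) at_top"
       "((\<lambda>n. real_of_int \<bar>n\<bar> ^ 2 * norm (f n)) \<longlongrightarrow> 0) at_bot"
    using assms unfolding rapid_decay_def by blast+
  have inv: "summable (\<lambda>i. inverse (real i ^ 2))" by (rule inverse_power_summable) simp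
  have key: "summable (\<lambda>i. norm (f (h i)))"
    if ht: "((\<lambda>i. real_of_int \<bar>h i\<bar> ^ 2 * norm (f (h i))) \<longlonglongrightarrow> 0)" and ha: "\<And>i. \<bar>h i\<bar> = int i"
    for h :: "nat \<Rightarrow> int"
  proof (rule summable_comparison_test_ev[OF _ inv])
    have "eventually (\<lambda>i. real_of_int \<bar>h i\<bar> ^ 2 * norm (f (h i)) < 1) sequentially"
      by (rule order_tendstoD(2)[OF ht]) simp
    then show "eventually (\<lambda>i. norm (norm (f (h i))) \<le> inverse (real i ^ 2)) sequentially"
      using eventually_gt_at_top[of "0::nat"]
    proof eventually_elim
      case (elim i)
      then have "real i ^ 2 * norm (f (h i)) < 1" using ha[of i] by simp
      moreover have "0 < real i ^ 2" using elim by simp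
      ultimately show ?case by (simp add: field_simps)
    qed
  qed
  have "summable (\<lambda>i. norm (f (int i)))"
    by (rule key[OF filterlim_compose[OF t(1) filterlim_int_seq]]) simp
  moreover have "summable (\<lambda>i. norm (f (- int i)))"
    by (rule key[OF filterlim_compose[OF t(2) filterlim_negint_seq]]) simp
  ultimately show ?thesis by (simp add: sum2_def)
qed

lemma sum2_kq:
  assumes "rapid_decay q" "rapid_decay r"
  shows "sum2 (kq q r)"
proof -
  have sq: "sum2 (\<lambda>n. norm (q n))" and sr: "sum2 (\<lambda>n. norm (r n))" using assms by (auto intro: rapid_sum2)
  have rt: "((\<lambda>n. norm (r n)) \<longlongrightarrow> 0) at_top" "((\<lambda>n. norm (r n)) \<longlongrightarrow> 0) at_bot"
    using rapid_zero[OF assms(2)] by (auto intro: tendsto_norm_zero)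
  have "sum2 (\<lambda>n. 2 * norm (q n) + norm (r n) + 2 * (norm (q n) * norm (r n)))"
    by (intro sum2_add sum2_cmult sq sr sum2_mult_zero rt) auto
  then show ?thesis by (simp add: kq_def[abs_def] mult.assoc)
qed


definition zeroP :: "sys \<Rightarrow> complex \<Rightarrow> int filter \<Rightarrow> bool" where
  "zeroP M z F \<longleftrightarrow> (\<forall>X. solves M z X \<longrightarrow> (Aof z X \<longlongrightarrow> 0) F \<longrightarrow> (Bof z X \<longlongrightarrow> 0) F \<longrightarrow> (\<forall>n. X n = (0, 0)))"

lemma uniq_gen:
  assumes "zeroP M z F" "solves M z X" "solves M z Y"
    "(Aof z X \<longlongrightarrow> a) F" "(Aof z Y \<longlongrightarrow> a) F" "(Bof z X \<longlongrightarrow> b) F" "(Bof z Y \<longlongrightarrow> b) F"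
  shows "X = Y"
proof
  fix n
  have s: "solves M z (lc 1 (-1) X Y)" by (rule solves_lc[OF assms(2,3)])
  have "((\<lambda>n. 1 * Aof z X n + (-1) * Aof z Y n) \<longlongrightarrow> 1 * a + (-1) * a) F"
    by (intro tendsto_add tendsto_mult tendsto_const assms(4,5))
  then have a0: "(Aof z (lc 1 (-1) X Y) \<longlongrightarrow> 0) F" unfolding Aof_lc[abs_def] by simp
  have "((\<lambda>n. 1 * Bof z X n + (-1) * Bof z Y n) \<longlongrightarrow> 1 * b + (-1) * b) F"
    by (intro tendsto_add tendsto_mult tendsto_const assms(6,7))
  then have b0: "(Bof z (lc 1 (-1) X Y) \<longlongrightarrow> 0) F" unfolding Bof_lc[abs_def] by simp
  have "lc 1 (-1) X Y n = (0, 0)" using assms(1) s a0 b0 unfolding zeroP_def by blast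
  then show "X n = Y n" by (simp add: lc_def prod_eq_iff)
qed

lemma tendsto0_fst_iff:
  assumes "norm z = 1"
  shows "((\<lambda>n. fst (X n)) \<longlongrightarrow> 0) F \<longleftrightarrow> (Aof z X \<longlongrightarrow> 0) F"
proof -
  have "(\<lambda>n. norm (fst (X n))) = (\<lambda>n. norm (Aof z X n))"
    using assms by (simp add: Aof_def norm_mult z_facts)
  then show ?thesis by (metis tendsto_norm_zero_iff)
qed

lemma tendsto0_snd_iff:
  assumes "norm z = 1"
  shows "((\<lambda>n. snd (X n)) \<longlongrightarrow> 0) F \<longleftrightarrow> (Bof z X \<longlongrightarrow> 0) F"
proof -
  have "(\<lambda>n. norm (snd (X n))) = (\<lambda>n. norm (Bof z X n))"
    using assms by (simp add: Bof_def norm_mult z_facts)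
  then show ?thesis by (metis tendsto_norm_zero_iff)
qed

context
  fixes z :: complex
  assumes z1: "norm z = 1"
begin

lemma is_psi_iff: "is_psi M z X \<longleftrightarrow> solves M z X \<and> (Aof z X \<longlongrightarrow> 0) at_top \<and> (Bof z X \<longlongrightarrow> 1) at_top"
  unfolding is_psi_def tendsto0_fst_iff[OF z1] by (simp add: Bof_def[abs_def])
lemma is_phi_iff: "is_phi M z X \<longleftrightarrow> solves M z X \<and> (Aof z X \<longlongrightarrow> 1) at_bot \<and> (Bof z X \<longlongrightarrow> 0) at_bot"
  unfolding is_phi_def tendsto0_snd_iff[OF z1] by (simp add: Aof_def[abs_def])
lemma is_psibar_iff: "is_psibar M z X \<longleftrightarrow> solves M z X \<and> (Aof z X \<longlongrightarrow> 1) at_top \<and> (Bof z X \<longlongrightarrow> 0) at_top"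
  unfolding is_psibar_def tendsto0_snd_iff[OF z1] by (simp add: Aof_def[abs_def])
lemma is_phibar_iff: "is_phibar M z X \<longleftrightarrow> solves M z X \<and> (Aof z X \<longlongrightarrow> 0) at_bot \<and> (Bof z X \<longlongrightarrow> 1) at_bot"
  unfolding is_phibar_def tendsto0_fst_iff[OF z1] by (simp add: Bof_def[abs_def])

lemma psi_eq: "zeroP M z at_top \<Longrightarrow> is_psi M z X \<Longrightarrow> psi M z = X"
  unfolding psi_def
  by (rule the_equality) (auto simp: is_psi_iff intro: uniq_gen)
lemma phi_eq: "zeroP M z at_bot \<Longrightarrow> is_phi M z X \<Longrightarrow> phi M z = X"
  unfolding phi_def
  by (rule the_equality) (auto simp: is_phi_iff intro: uniq_gen)
lemma psibar_eq: "zeroP M z at_top \<Longrightarrow> is_psibar M z X \<Longrightarrow> psibar M z = X"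
  unfolding psibar_def
  by (rule the_equality) (auto simp: is_psibar_iff intro: uniq_gen)
lemma phibar_eq: "zeroP M z at_bot \<Longrightarrow> is_phibar M z X \<Longrightarrow> phibar M z = X"
  unfolding phibar_def
  by (rule the_equality) (auto simp: is_phibar_iff intro: uniq_gen)

end

context
  fixes q r :: "int \<Rightarrow> complex" and z :: complex
  assumes z1: "norm z = 1" and sk: "sum2 (kq q r)"
begin

lemma Q_zeroP_top: "zeroP (sysQ q r) z at_top"
  unfolding zeroP_def using Q_zero_top[OF z1 sk] by blast
lemma Q_zeroP_bot: "zeroP (sysQ q r) z at_bot"
  unfolding zeroP_def using Q_zero_bot[OF z1 sk] by blast

lemma Q_ex: "\<exists>X. solves (sysQ q r) z X \<and> X 0 = c"
  using solQ_solves[OF z_facts(1)[OF z1]] solQ_0 by blast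

lemma Q_surj_top: "\<exists>X. solves (sysQ q r) z X \<and> (Aof z X \<longlongrightarrow> c1) at_top \<and> (Bof z X \<longlongrightarrow> c2) at_top"
proof (rule surj_gen[OF trivial_limit_at_top_linorder])
  show "\<And>X. solves (sysQ q r) z X \<Longrightarrow> (\<exists>a. (Aof z X \<longlongrightarrow> a) at_top) \<and> (\<exists>b. (Bof z X \<longlongrightarrow> b) at_top)"
    using Q_conv[OF z1 sk] by blast
  show "\<And>X. solves (sysQ q r) z X \<Longrightarrow> (Aof z X \<longlongrightarrow> 0) at_top \<Longrightarrow> (Bof z X \<longlongrightarrow> 0) at_top \<Longrightarrow> X 0 = (0, 0)"
    using Q_zero_top[OF z1 sk] by blast
  show "\<And>c. \<exists>X. solves (sysQ q r) z X \<and> X 0 = c" by (rule Q_ex)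
qed

lemma Q_surj_bot: "\<exists>X. solves (sysQ q r) z X \<and> (Aof z X \<longlongrightarrow> c1) at_bot \<and> (Bof z X \<longlongrightarrow> c2) at_bot"
proof (rule surj_gen[OF trivial_limit_at_bot_linorder])
  show "\<And>X. solves (sysQ q r) z X \<Longrightarrow> (\<exists>a. (Aof z X \<longlongrightarrow> a) at_bot) \<and> (\<exists>b. (Bof z X \<longlongrightarrow> b) at_bot)"
    using Q_conv[OF z1 sk] by blast
  show "\<And>X. solves (sysQ q r) z X \<Longrightarrow> (Aof z X \<longlongrightarrow> 0) at_bot \<Longrightarrow> (Bof z X \<longlongrightarrow> 0) at_bot \<Longrightarrow> X 0 = (0, 0)"
    using Q_zero_bot[OF z1 sk] by blast
  show "\<And>c. \<exists>X. solves (sysQ q r) z X \<and> X 0 = c" by (rule Q_ex)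
qed

lemma Q_psi: "is_psi (sysQ q r) z (psi (sysQ q r) z)"
proof -
  obtain X where "solves (sysQ q r) z X" "(Aof z X \<longlongrightarrow> 0) at_top" "(Bof z X \<longlongrightarrow> 1) at_top"
    using Q_surj_top by blast
  then have "is_psi (sysQ q r) z X" by (simp add: is_psi_iff[OF z1])
  then show ?thesis using psi_eq[OF z1 Q_zeroP_top] by simp
qed
lemma Q_phi: "is_phi (sysQ q r) z (phi (sysQ q r) z)"
proof -
  obtain X where "solves (sysQ q r) z X" "(Aof z X \<longlongrightarrow> 1) at_bot" "(Bof z X \<longlongrightarrow> 0) at_bot"
    using Q_surj_bot by blast
  then have "is_phi (sysQ q r) z X" by (simp add: is_phi_iff[OF z1])
  then show ?thesis using phi_eq[OF z1 Q_zeroP_bot] by simp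
qed
lemma Q_psibar: "is_psibar (sysQ q r) z (psibar (sysQ q r) z)"
proof -
  obtain X where "solves (sysQ q r) z X" "(Aof z X \<longlongrightarrow> 1) at_top" "(Bof z X \<longlongrightarrow> 0) at_top"
    using Q_surj_top by blast
  then have "is_psibar (sysQ q r) z X" by (simp add: is_psibar_iff[OF z1])
  then show ?thesis using psibar_eq[OF z1 Q_zeroP_top] by simp
qed
lemma Q_phibar: "is_phibar (sysQ q r) z (phibar (sysQ q r) z)"
proof -
  obtain X where "solves (sysQ q r) z X" "(Aof z X \<longlongrightarrow> 0) at_bot" "(Bof z X \<longlongrightarrow> 1) at_bot"
    using Q_surj_bot by blast
  then have "is_phibar (sysQ q r) z X" by (simp add: is_phibar_iff[OF z1])
  then show ?thesis using phibar_eq[OF z1 Q_zeroP_bot] by simp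
qed

end


lemma cancel_aux: "(X::complex) \<noteq> 0 \<Longrightarrow> (u / X) * (X * v / w) = u * v / w"
  by (simp add: field_simps)

lemma alg_uv1:
  fixes z w a b a' b' q r r' D' E' :: complex
  assumes z0: "z \<noteq> 0" and w: "w = 1 - inverse (z^2)" and w0: "w \<noteq> 0" and "D' \<noteq> 0" "E' \<noteq> 0" "1 - q * r \<noteq> 0"
    and "1 + q * r' \<noteq> 0"
    and a: "a = z * a' + (z - inverse z) * q * b'"
  shows "E' * a / w = z * ((1 + q * r') * E' * a' / w) + z * (q * E' / ((1 - q * r) * D')) * ((1 - q * r) * D' * (b' - r' * a' / w))"
proof -
  have zw: "z - inverse z = z * w" using z0 by (simp add: w field_simps power2_eq_square)
  show ?thesis unfolding a zw using assms by (simp add: field_simps)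
qed

lemma alg_uv2:
  fixes z w a b a' b' q r r' D' E' :: complex
  assumes z0: "z \<noteq> 0" and w: "w = 1 - inverse (z^2)" and w0: "w \<noteq> 0" and "D' \<noteq> 0" "E' \<noteq> 0" "1 - q * r \<noteq> 0"
    and "1 + q * r' \<noteq> 0"
    and a: "a = z * a' + (z - inverse z) * q * b'"
    and b: "b = z * r * a' + (inverse z + (z - inverse z) * q * r) * b'"
  shows "D' * (b - r * a / w) = inverse z * ((- r + r' - q * r * r') * D' / ((1 + q * r') * E')) * ((1 + q * r') * E' * a' / w) + inverse z * ((1 - q * r) * D' * (b' - r' * a' / w))"
proof -
  have zw: "z - inverse z = z * w" using z0 by (simp add: w field_simps power2_eq_square)
  have iz: "inverse z = z * (1 - w)" using z0 by (simp add: w field_simps power2_eq_square)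
  have v: "((- r + r' - q * r * r') * D' / ((1 + q * r') * E')) * ((1 + q * r') * E' * a' / w) = (- r + r' - q * r * r') * D' * a' / w"
    by (rule cancel_aux) (use assms in simp)
  have "D' * (b - r * a / w) = inverse z * ((- r + r' - q * r * r') * D' * a' / w) + inverse z * ((1 - q * r) * D' * (b' - r' * a' / w))"
    unfolding a b zw iz using w0 by (simp add: field_simps)
  then show ?thesis by (simp only: mult.assoc[of "inverse z"] v)
qed


lemma alg_ps1:
  fixes z a1 b1 a2 b2 q q1 r1 E' D D1 :: complex
  assumes z0: "z \<noteq> 0" and "D1 \<noteq> 0"
    and a: "a1 = z * a2 + (z - inverse z) * q1 * b2"
    and b: "b1 = z * r1 * a2 + (inverse z + (z - inverse z) * q1 * r1) * b2"
  shows "z * E' * (a1 + q * b1) = z * (z * ((1 + q * r1) * E') * (a2 + q1 * b2))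
          + z * ((q - q1 - q * q1 * r1) * E' / D1) * (inverse z * D1 * b2)"
  unfolding a b using assms by (simp add: field_simps)

lemma cancel_aux2: "(X::complex) \<noteq> 0 \<Longrightarrow> (u / X) * (z * X * v) = u * z * v"
  by (simp add: field_simps)

lemma alg_ps2:
  fixes z a1 b1 a2 b2 q q1 r1 E' D D1 :: complex
  assumes z0: "z \<noteq> 0" and "(1 + q * r1) * E' \<noteq> 0" and D1: "D1 = (1 - q1 * r1) * D"
    and a: "a1 = z * a2 + (z - inverse z) * q1 * b2"
    and b: "b1 = z * r1 * a2 + (inverse z + (z - inverse z) * q1 * r1) * b2"
  shows "inverse z * D * b1 = inverse z * (r1 * D / ((1 + q * r1) * E')) * (z * ((1 + q * r1) * E') * (a2 + q1 * b2))
          + inverse z * (inverse z * D1 * b2)"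
proof -
  have c: "(r1 * D / ((1 + q * r1) * E')) * (z * ((1 + q * r1) * E') * (a2 + q1 * b2)) = r1 * D * z * (a2 + q1 * b2)"
    by (rule cancel_aux2) (rule assms(2))
  have "inverse z * D * b1 = inverse z * (r1 * D * z * (a2 + q1 * b2)) + inverse z * (inverse z * D1 * b2)"
    unfolding a b D1 using z0 by (simp add: field_simps)
  then show ?thesis by (simp only: mult.assoc[of "inverse z"] c)
qed


definition wz :: "complex \<Rightarrow> complex" where "wz z = 1 - inverse (z^2)"

definition Guv :: "(int \<Rightarrow> complex) \<Rightarrow> (int \<Rightarrow> complex) \<Rightarrow> complex \<Rightarrow> (int \<Rightarrow> complex \<times> complex) \<Rightarrow> int \<Rightarrow> complex \<times> complex" where
  "Guv q r z X n = (Ep q r (n-1) * fst (X n) / wz z, Dp q r (n-1) * (snd (X n) - r n * fst (X n) / wz z))"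
definition Guv_inv :: "(int \<Rightarrow> complex) \<Rightarrow> (int \<Rightarrow> complex) \<Rightarrow> complex \<Rightarrow> (int \<Rightarrow> complex \<times> complex) \<Rightarrow> int \<Rightarrow> complex \<times> complex" where
  "Guv_inv q r z Y n = (wz z * fst (Y n) / Ep q r (n-1), snd (Y n) / Dp q r (n-1) + r n * fst (Y n) / Ep q r (n-1))"
definition Gps :: "(int \<Rightarrow> complex) \<Rightarrow> (int \<Rightarrow> complex) \<Rightarrow> complex \<Rightarrow> (int \<Rightarrow> complex \<times> complex) \<Rightarrow> int \<Rightarrow> complex \<times> complex" where
  "Gps q r z X n = (z * Ep q r (n-1) * (fst (X (n+1)) + q n * snd (X (n+1))), inverse z * Dp q r n * snd (X (n+1)))"
definition Gps_inv :: "(int \<Rightarrow> complex) \<Rightarrow> (int \<Rightarrow> complex) \<Rightarrow> complex \<Rightarrow> (int \<Rightarrow> complex \<times> complex) \<Rightarrow> int \<Rightarrow> complex \<times> complex" where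
  "Gps_inv q r z Y n = (fst (Y (n-1)) / (z * Ep q r (n-2)) - q (n-1) * z * snd (Y (n-1)) / Dp q r (n-1),
     z * snd (Y (n-1)) / Dp q r (n-1))"

lemma solvesU_iff:
  "solves (sysU a b) z Y \<longleftrightarrow> (\<forall>n. fst (Y n) = z * fst (Y (n+1)) + z * a n * snd (Y (n+1)) \<and>
      snd (Y n) = inverse z * b n * fst (Y (n+1)) + inverse z * snd (Y (n+1)))"
  by (simp add: solves_def sysU_def)

definition guv :: "(int \<Rightarrow> complex) \<Rightarrow> (int \<Rightarrow> complex) \<Rightarrow> complex \<Rightarrow> int \<Rightarrow> complex \<times> complex \<Rightarrow> complex \<times> complex" where
  "guv q r z n v = (Ep q r (n-1) * fst v / wz z, Dp q r (n-1) * (snd v - r n * fst v / wz z))"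
definition gps :: "(int \<Rightarrow> complex) \<Rightarrow> (int \<Rightarrow> complex) \<Rightarrow> complex \<Rightarrow> int \<Rightarrow> complex \<times> complex \<Rightarrow> complex \<times> complex" where
  "gps q r z n v = (z * Ep q r (n-1) * (fst v + q n * snd v), inverse z * Dp q r n * snd v)"
definition stepU :: "(int \<Rightarrow> complex) \<Rightarrow> (int \<Rightarrow> complex) \<Rightarrow> complex \<Rightarrow> int \<Rightarrow> complex \<times> complex \<Rightarrow> complex \<times> complex" where
  "stepU a b z n v = (z * fst v + z * a n * snd v, inverse z * b n * fst v + inverse z * snd v)"

lemma solvesU_step: "solves (sysU a b) z Y \<longleftrightarrow> (\<forall>n. Y n = stepU a b z n (Y (n+1)))"
  by (simp add: solves_def sysU_def stepU_def prod_eq_iff)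

lemma Guv_guv: "Guv q r z X n = guv q r z n (X n)" by (simp add: Guv_def guv_def)
lemma Gps_gps: "Gps q r z X n = gps q r z n (X (n+1))" by (simp add: Gps_def gps_def)

context
  fixes q r :: "int \<Rightarrow> complex" and z :: complex
  assumes z0: "z \<noteq> 0" and z2: "z^2 \<noteq> 1"
    and Drec: "\<And>n. Dp q r n = (1 - q n * r n) * Dp q r (n-1)"
    and Erec: "\<And>n. Ep q r n = (1 + q n * r (n+1)) * Ep q r (n-1)"
    and Dnz: "\<And>n. Dp q r n \<noteq> 0" and Enz: "\<And>n. Ep q r n \<noteq> 0"
begin

lemma w_nz: "wz z \<noteq> 0"
proof
  assume "wz z = 0"
  then have "inverse (z^2) = 1" by (simp add: wz_def)
  then have "z^2 = 1" by (metis inverse_1 inverse_inverse_eq)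
  with z2 show False by simp
qed

lemma Guv_Guv_inv: "Guv q r z (Guv_inv q r z Y) = Y"
  using w_nz Dnz Enz by (auto simp: Guv_def Guv_inv_def fun_eq_iff prod_eq_iff field_simps)

lemma Gps_Gps_inv: "Gps q r z (Gps_inv q r z Y) = Y"
  using z0 Dnz Enz by (auto simp: Gps_def Gps_inv_def fun_eq_iff prod_eq_iff field_simps)

lemma guv_inj: "guv q r z n v = guv q r z n v' \<Longrightarrow> v = v'"
  using w_nz Dnz[of "n-1"] Enz[of "n-1"] by (auto simp: guv_def prod_eq_iff field_simps)

lemma gps_inj: "gps q r z n v = gps q r z n v' \<Longrightarrow> v = v'"
  using z0 Dnz[of n] Enz[of "n-1"] by (auto simp: gps_def prod_eq_iff field_simps)

lemma KU: "guv q r z n (stepQ q r z n v') = stepU (uu q r) (vv q r) z n (guv q r z (n+1) v')"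
proof -
  have D: "Dp q r n = (1 - q n * r n) * Dp q r (n-1)" by (rule Drec)
  have E: "Ep q r n = (1 + q n * r (n+1)) * Ep q r (n-1)" by (rule Erec)
  have d1: "Dp q r (n-1) \<noteq> 0" "1 - q n * r n \<noteq> 0" using Dnz[of n] Dnz[of "n-1"] D by auto
  have d2: "Ep q r (n-1) \<noteq> 0" "1 + q n * r (n+1) \<noteq> 0" using Enz[of n] Enz[of "n-1"] E by auto
  define a where "a = fst (stepQ q r z n v')"
  define b where "b = snd (stepQ q r z n v')"
  have a: "a = z * fst v' + (z - inverse z) * q n * snd v'" by (simp add: a_def stepQ_def)
  have b: "b = z * r n * fst v' + (inverse z + (z - inverse z) * q n * r n) * snd v'" by (simp add: b_def stepQ_def)
  note h1 = alg_uv1[OF z0 wz_def w_nz d1(1) d2(1) d1(2) d2(2) a]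
  note h2 = alg_uv2[OF z0 wz_def w_nz d1(1) d2(1) d1(2) d2(2) a b]
  have "guv q r z n (stepQ q r z n v') = (Ep q r (n-1) * a / wz z, Dp q r (n-1) * (b - r n * a / wz z))"
    by (simp add: guv_def a_def b_def)
  also have "\<dots> = stepU (uu q r) (vv q r) z n (guv q r z (n+1) v')"
    unfolding stepU_def guv_def uu_def vv_def fst_conv snd_conv add_diff_cancel_right' D E
    using h1 h2 by simp
  finally show ?thesis .
qed

lemma KPS: "gps q r z n (stepQ q r z (n+1) v) = stepU (pp q r) (ss q r) z n (gps q r z (n+1) v)"
proof -
  have D1: "Dp q r (n+1) = (1 - q (n+1) * r (n+1)) * Dp q r n" using Drec[of "n+1"] by simp
  have E: "Ep q r n = (1 + q n * r (n+1)) * Ep q r (n-1)" by (rule Erec)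
  have nzE: "(1 + q n * r (n+1)) * Ep q r (n-1) \<noteq> 0" using Enz[of n] E by simp
  define a1 where "a1 = fst (stepQ q r z (n+1) v)"
  define b1 where "b1 = snd (stepQ q r z (n+1) v)"
  have a: "a1 = z * fst v + (z - inverse z) * q (n+1) * snd v" by (simp add: a1_def stepQ_def)
  have b: "b1 = z * r (n+1) * fst v + (inverse z + (z - inverse z) * q (n+1) * r (n+1)) * snd v"
    by (simp add: b1_def stepQ_def)
  note h1 = alg_ps1[OF z0 Dnz[of "n+1"] a b, of "Ep q r (n-1)" "q n"]
  note h2 = alg_ps2[OF z0 nzE D1 a b]
  have "gps q r z n (stepQ q r z (n+1) v) = (z * Ep q r (n-1) * (a1 + q n * b1), inverse z * Dp q r n * b1)"
    by (simp add: gps_def a1_def b1_def)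
  also have "\<dots> = stepU (pp q r) (ss q r) z n (gps q r z (n+1) v)"
    unfolding stepU_def gps_def pp_def ss_def fst_conv snd_conv add_diff_cancel_right'
    using h1 h2 E by simp
  finally show ?thesis .
qed

lemma Guv_solves:
  assumes "solves (sysQ q r) z X"
  shows "solves (sysU (uu q r) (vv q r)) z (Guv q r z X)"
  unfolding solvesU_step Guv_guv
proof
  fix n
  have "X n = stepQ q r z n (X (n+1))" using assms solves_step by blast
  then show "guv q r z n (X n) = stepU (uu q r) (vv q r) z n (guv q r z (n + 1) (X (n + 1)))"
    using KU by simp
qed

lemma Guv_inv_solves:
  assumes Y: "solves (sysU (uu q r) (vv q r)) z Y"
  shows "solves (sysQ q r) z (Guv_inv q r z Y)"
  unfolding solves_step
proof
  fix n
  define X where "X = Guv_inv q r z Y"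
  have gX: "guv q r z m (X m) = Y m" for m using Guv_Guv_inv[of Y] unfolding X_def Guv_guv by metis
  have "guv q r z n (stepQ q r z n (X (n+1))) = stepU (uu q r) (vv q r) z n (Y (n+1))"
    using KU gX by simp
  also have "\<dots> = Y n" using Y solvesU_step by metis
  also have "\<dots> = guv q r z n (X n)" using gX by simp
  finally show "Guv_inv q r z Y n = stepQ q r z n (Guv_inv q r z Y (n + 1))"
    using guv_inj unfolding X_def by metis
qed

lemma Gps_solves:
  assumes "solves (sysQ q r) z X"
  shows "solves (sysU (pp q r) (ss q r)) z (Gps q r z X)"
  unfolding solvesU_step Gps_gps
proof
  fix n
  have "X (n+1) = stepQ q r z (n+1) (X (n+1+1))" using assms solves_step by blast
  then show "gps q r z n (X (n + 1)) = stepU (pp q r) (ss q r) z n (gps q r z (n + 1) (X (n + 1 + 1)))"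
    using KPS by simp
qed

lemma Gps_inv_solves:
  assumes Y: "solves (sysU (pp q r) (ss q r)) z Y"
  shows "solves (sysQ q r) z (Gps_inv q r z Y)"
  unfolding solves_step
proof
  fix m :: int
  define X where "X = Gps_inv q r z Y"
  define n where "n = m - 1"
  have m: "m = n + 1" by (simp add: n_def)
  have gX: "gps q r z k (X (k+1)) = Y k" for k using Gps_Gps_inv[of Y] unfolding X_def Gps_gps by metis
  have "gps q r z n (stepQ q r z (n+1) (X (n+1+1))) = stepU (pp q r) (ss q r) z n (gps q r z (n+1) (X (n+1+1)))"
    by (rule KPS)
  also have "\<dots> = stepU (pp q r) (ss q r) z n (Y (n+1))" by (simp only: gX)
  also have "\<dots> = Y n" using Y solvesU_step by metis
  also have "\<dots> = gps q r z n (X (n+1))" using gX by simp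
  finally have "stepQ q r z (n+1) (X (n+1+1)) = X (n+1)" by (rule gps_inj)
  then show "Gps_inv q r z Y m = stepQ q r z m (Gps_inv q r z Y (m + 1))"
    unfolding X_def m by simp
qed

end


lemma shift_m1_top: "(f \<longlongrightarrow> L) at_top \<Longrightarrow> ((\<lambda>n::int. f (n - 1)) \<longlongrightarrow> L) at_top"
  using tendsto_shift_top[of f L "-1"] by simp
lemma shift_m1_bot: "(f \<longlongrightarrow> L) at_bot \<Longrightarrow> ((\<lambda>n::int. f (n - 1)) \<longlongrightarrow> L) at_bot"
  using tendsto_shift_bot[of f L "-1"] by simp
lemma shift_m2_top: "(f \<longlongrightarrow> L) at_top \<Longrightarrow> ((\<lambda>n::int. f (n - 2)) \<longlongrightarrow> L) at_top"
  using tendsto_shift_top[of f L "-2"] by simp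
lemma shift_m2_bot: "(f \<longlongrightarrow> L) at_bot \<Longrightarrow> ((\<lambda>n::int. f (n - 2)) \<longlongrightarrow> L) at_bot"
  using tendsto_shift_bot[of f L "-2"] by simp
lemma shift_p1_top: "(f \<longlongrightarrow> L) at_top \<Longrightarrow> ((\<lambda>n::int. f (n + 1)) \<longlongrightarrow> L) at_top"
  using tendsto_shift_top[of f L 1] by simp
lemma shift_p1_bot: "(f \<longlongrightarrow> L) at_bot \<Longrightarrow> ((\<lambda>n::int. f (n + 1)) \<longlongrightarrow> L) at_bot"
  using tendsto_shift_bot[of f L 1] by simp

lemma tendsto_zero_mult_bdd:
  fixes g h c :: "int \<Rightarrow> complex"
  assumes "(g \<longlongrightarrow> 0) F" "\<And>n. norm (c n) = 1" "(h \<longlongrightarrow> L) F"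
  shows "((\<lambda>n. g n * c n * h n) \<longlongrightarrow> 0) F"
proof -
  have "((\<lambda>n. norm (g n) * norm (h n)) \<longlongrightarrow> 0 * norm L) F"
    by (intro tendsto_mult tendsto_norm assms(3)) (use tendsto_norm_zero[OF assms(1)] in simp)
  then have "((\<lambda>n. norm (g n * c n * h n)) \<longlongrightarrow> 0) F" by (simp add: norm_mult assms(2))
  then show ?thesis by (rule tendsto_norm_zero_cancel)
qed

context
  fixes q r :: "int \<Rightarrow> complex" and z :: complex
  assumes rq: "rapid_decay q" and rr: "rapid_decay r"
    and nz1: "\<And>n. 1 - q n * r n \<noteq> 0" and nz2: "\<And>n. 1 + q n * r (n+1) \<noteq> 0"
    and z1: "norm z = 1" and z2: "z^2 \<noteq> 1"
begin

lemma z0: "z \<noteq> 0" using z1 by auto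

lemma sk: "sum2 (kq q r)" by (rule sum2_kq[OF rq rr])

lemma q0: "(q \<longlongrightarrow> 0) at_top" "(q \<longlongrightarrow> 0) at_bot" using rapid_zero[OF rq] by auto
lemma r0: "(r \<longlongrightarrow> 0) at_top" "(r \<longlongrightarrow> 0) at_bot" using rapid_zero[OF rr] by auto

lemma D_all:
  shows "\<And>n. Dp q r n \<noteq> 0" "\<And>n. Dp q r n = (1 - q n * r n) * Dp q r (n-1)"
    "(Dp q r \<longlongrightarrow> 1) at_bot" "(Dp q r \<longlongrightarrow> Dinf q r) at_top" "Dinf q r \<noteq> 0"
proof -
  have s: "sum2 (\<lambda>n. norm (1 - (1 - q n * r n)))"
  proof -
    have "sum2 (\<lambda>n. norm (q n) * norm (r n))"
      by (intro sum2_mult_zero rapid_sum2[OF rq] tendsto_norm_zero r0) auto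
    then show ?thesis by (simp add: norm_mult)
  qed
  have P: "Dp q r = (\<lambda>n. Lim at_bot (\<lambda>m. \<Prod>j\<in>{m..n}. 1 - q j * r j))" by (simp add: Dp_def[abs_def])
  note pm = prod_main[where a="\<lambda>j. 1 - q j * r j", OF nz1 s, folded Dp_def]
  show "\<And>n. Dp q r n \<noteq> 0" by (rule pm(2))
  show "\<And>n. Dp q r n = (1 - q n * r n) * Dp q r (n-1)" by (rule pm(3))
  show "(Dp q r \<longlongrightarrow> 1) at_bot" by (rule pm(4))
  show "(Dp q r \<longlongrightarrow> Dinf q r) at_top" "Dinf q r \<noteq> 0" using pm(5,6) by (simp_all add: Dinf_def)
qed

lemma E_all:
  shows "\<And>n. Ep q r n \<noteq> 0" "\<And>n. Ep q r n = (1 + q n * r (n+1)) * Ep q r (n-1)"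
    "(Ep q r \<longlongrightarrow> 1) at_bot" "(Ep q r \<longlongrightarrow> Einf q r) at_top" "Einf q r \<noteq> 0"
proof -
  have s: "sum2 (\<lambda>n. norm (1 - (1 + q n * r (n+1))))"
  proof -
    have "sum2 (\<lambda>n. norm (q n) * norm (r (n+1)))"
      by (intro sum2_mult_zero rapid_sum2[OF rq] tendsto_norm_zero shift_p1_top shift_p1_bot r0) auto
    then show ?thesis by (simp add: norm_mult)
  qed
  have P: "Ep q r = (\<lambda>n. Lim at_bot (\<lambda>m. \<Prod>j\<in>{m..n}. 1 + q j * r (j+1)))" by (simp add: Ep_def[abs_def])
  note pm = prod_main[where a="\<lambda>j. 1 + q j * r (j+1)", OF nz2 s, folded Ep_def]
  show "\<And>n. Ep q r n \<noteq> 0" by (rule pm(2))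
  show "\<And>n. Ep q r n = (1 + q n * r (n+1)) * Ep q r (n-1)" by (rule pm(3))
  show "(Ep q r \<longlongrightarrow> 1) at_bot" by (rule pm(4))
  show "(Ep q r \<longlongrightarrow> Einf q r) at_top" "Einf q r \<noteq> 0" using pm(5,6) by (simp_all add: Einf_def)
qed

lemmas J_ctx = z0 z2 D_all(2) E_all(2) D_all(1) E_all(1)

lemma Aof_Guv: "Aof z (Guv q r z X) n = Ep q r (n-1) * Aof z X n / wz z"
  by (simp add: Aof_def Guv_def)

lemma wnz: "wz z \<noteq> 0" by (rule w_nz[OF J_ctx])

lemma pw: "z powi (n+1) = z powi n * z" "z powi (-n) = inverse (z powi n)"
  "z powi (-(n+1)) = inverse (z powi n) * inverse z" "z powi (n - 1) * z = z powi n"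
proof -
  show e: "z powi (n+1) = z powi n * z" by (rule power_int_add_1) (use z0 in simp)
  show "z powi (-n) = inverse (z powi n)" by (rule power_int_minus)
  have "z powi (-(n+1)) = inverse (z powi (n+1))" by (rule power_int_minus)
  then show "z powi (-(n+1)) = inverse (z powi n) * inverse z" by (simp only: e inverse_mult_distrib)
  show "z powi (n - 1) * z = z powi n" using power_int_add_1[of z "n-1"] z0 by simp
qed

lemma pnz: "z powi n \<noteq> 0" using z0 by simp

lemma Bof_Guv: "Bof z (Guv q r z X) n = Dp q r (n-1) * (Bof z X n - r n * (inverse (z powi n))^2 * Aof z X n / wz z)"
proof -
  define p where "p = z powi n"
  have p0: "p \<noteq> 0" unfolding p_def by (rule pnz)
  have "Bof z (Guv q r z X) n = Dp q r (n-1) * (snd (X n) - r n * fst (X n) / wz z) * inverse p"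
    by (simp add: Bof_def Guv_def pw(2) p_def)
  also have "\<dots> = Dp q r (n-1) * (snd (X n) * inverse p - r n * (inverse p)^2 * (fst (X n) * p) / wz z)"
    using p0 wnz by (simp add: field_simps power2_eq_square)
  finally show ?thesis by (simp add: Aof_def Bof_def pw(2) p_def)
qed

lemma Aof_Gps: "Aof z (Gps q r z X) n = Ep q r (n-1) * (Aof z X (n+1) + q n * (z powi (n+1))^2 * Bof z X (n+1))"
proof -
  define p where "p = z powi n"
  have p0: "p \<noteq> 0" unfolding p_def by (rule pnz)
  have "Aof z (Gps q r z X) n = z * Ep q r (n-1) * (fst (X (n+1)) + q n * snd (X (n+1))) * p"
    by (simp add: Aof_def Gps_def p_def)
  also have "\<dots> = Ep q r (n-1) * (fst (X (n+1)) * (p * z) + q n * (p * z)^2 * (snd (X (n+1)) * (inverse p * inverse z)))"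
    using p0 z0 by (simp add: field_simps power2_eq_square)
  also have "\<dots> = Ep q r (n-1) * (Aof z X (n+1) + q n * (z powi (n+1))^2 * Bof z X (n+1))"
    by (simp only: Aof_def Bof_def pw(1) pw(3) p_def)
  finally show ?thesis .
qed

lemma Bof_Gps: "Bof z (Gps q r z X) n = Dp q r n * Bof z X (n+1)"
proof -
  define p where "p = z powi n"
  have p0: "p \<noteq> 0" unfolding p_def by (rule pnz)
  have "Bof z (Gps q r z X) n = inverse z * Dp q r n * snd (X (n+1)) * inverse p"
    by (simp add: Bof_def Gps_def pw(2) p_def)
  also have "\<dots> = Dp q r n * (snd (X (n+1)) * (inverse p * inverse z))"
    by (simp add: field_simps)
  also have "\<dots> = Dp q r n * Bof z X (n+1)" by (simp only: Bof_def pw(3) p_def)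
  finally show ?thesis .
qed

lemma Aof_Guv_inv: "Aof z (Guv_inv q r z Y) n = wz z * Aof z Y n / Ep q r (n-1)"
  by (simp add: Aof_def Guv_inv_def)

lemma Bof_Guv_inv: "Bof z (Guv_inv q r z Y) n = Bof z Y n / Dp q r (n-1) + r n * (inverse (z powi n))^2 * Aof z Y n / Ep q r (n-1)"
proof -
  define p where "p = z powi n"
  have p0: "p \<noteq> 0" unfolding p_def by (rule pnz)
  have "Bof z (Guv_inv q r z Y) n = (snd (Y n) / Dp q r (n-1) + r n * fst (Y n) / Ep q r (n-1)) * inverse p"
    by (simp add: Bof_def Guv_inv_def pw(2) p_def)
  also have "\<dots> = snd (Y n) * inverse p / Dp q r (n-1) + r n * (inverse p)^2 * (fst (Y n) * p) / Ep q r (n-1)"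
    using p0 by (simp add: field_simps power2_eq_square)
  finally show ?thesis by (simp add: Aof_def Bof_def pw(2) p_def)
qed

lemma Aof_Gps_inv: "Aof z (Gps_inv q r z Y) n = Aof z Y (n-1) / Ep q r (n-2) - q (n-1) * (z powi n)^2 * Bof z Y (n-1) / Dp q r (n-1)"
proof -
  define p where "p = z powi (n-1)"
  have p0: "p \<noteq> 0" unfolding p_def by (rule pnz)
  have zn: "z powi n = p * z" using pw(4)[of n] by (simp add: p_def)
  have zm: "z powi (- (n - 1)) = inverse p" using pw(2)[of "n-1"] by (simp add: p_def)
  have "Aof z (Gps_inv q r z Y) n = (fst (Y (n-1)) / (z * Ep q r (n-2)) - q (n-1) * z * snd (Y (n-1)) / Dp q r (n-1)) * (p * z)"
    by (simp add: Aof_def Gps_inv_def zn)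
  also have "\<dots> = fst (Y (n-1)) * p / Ep q r (n-2) - q (n-1) * (p * z)^2 * (snd (Y (n-1)) * inverse p) / Dp q r (n-1)"
    using p0 z0 by (simp add: field_simps power2_eq_square)
  also have "\<dots> = Aof z Y (n-1) / Ep q r (n-2) - q (n-1) * (z powi n)^2 * Bof z Y (n-1) / Dp q r (n-1)"
    by (simp only: Aof_def Bof_def zn zm p_def)
  finally show ?thesis .
qed

lemma Bof_Gps_inv: "Bof z (Gps_inv q r z Y) n = Bof z Y (n-1) / Dp q r (n-1)"
proof -
  define p where "p = z powi (n-1)"
  have p0: "p \<noteq> 0" unfolding p_def by (rule pnz)
  have zn0: "z powi n = p * z" unfolding p_def by (rule pw(4)[symmetric])
  have zn: "z powi (- n) = inverse p * inverse z" unfolding pw(2) zn0 by (rule inverse_mult_distrib)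
  have zm: "z powi (- (n - 1)) = inverse p" using pw(2)[of "n-1"] by (simp add: p_def)
  have "Bof z (Gps_inv q r z Y) n = z * snd (Y (n-1)) / Dp q r (n-1) * (inverse p * inverse z)"
    by (simp add: Bof_def Gps_inv_def zn)
  also have "\<dots> = snd (Y (n-1)) * inverse p / Dp q r (n-1)"
    using z0 by (simp add: field_simps)
  also have "\<dots> = Bof z Y (n-1) / Dp q r (n-1)" by (simp only: Bof_def zm)
  finally show ?thesis .
qed


lemma c1: "norm ((inverse (z powi n))^2) = 1" using z1 by (simp add: norm_power norm_inverse norm_power_int)
lemma c2: "norm ((z powi n)^2) = 1" using z1 by (simp add: norm_power norm_power_int)

lemma lim_uv:
  assumes "(Aof z X \<longlongrightarrow> a) F" "(Bof z X \<longlongrightarrow> b) F" "((\<lambda>n. Ep q r (n-1)) \<longlongrightarrow> e) F"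
    "((\<lambda>n. Dp q r (n-1)) \<longlongrightarrow> d) F" "(r \<longlongrightarrow> 0) F"
  shows "(Aof z (Guv q r z X) \<longlongrightarrow> e * a / wz z) F" "(Bof z (Guv q r z X) \<longlongrightarrow> d * b) F"
proof -
  have eA: "Aof z (Guv q r z X) = (\<lambda>n. Ep q r (n-1) * Aof z X n / wz z)" by (rule ext) (rule Aof_Guv)
  show "(Aof z (Guv q r z X) \<longlongrightarrow> e * a / wz z) F" unfolding eA
    by (intro tendsto_divide tendsto_mult assms tendsto_const wnz)
  have eB: "Bof z (Guv q r z X) = (\<lambda>n. Dp q r (n-1) * (Bof z X n - r n * (inverse (z powi n))^2 * Aof z X n / wz z))"
    by (rule ext) (rule Bof_Guv)
  have "((\<lambda>n. r n * (inverse (z powi n))^2 * Aof z X n) \<longlongrightarrow> 0) F"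
    by (rule tendsto_zero_mult_bdd[OF assms(5) c1 assms(1)])
  then have "((\<lambda>n. r n * (inverse (z powi n))^2 * Aof z X n / wz z) \<longlongrightarrow> 0 / wz z) F"
    by (intro tendsto_divide tendsto_const wnz)
  then have "((\<lambda>n. Dp q r (n-1) * (Bof z X n - r n * (inverse (z powi n))^2 * Aof z X n / wz z)) \<longlongrightarrow> d * (b - 0 / wz z)) F"
    by (intro tendsto_mult tendsto_diff assms)
  then show "(Bof z (Guv q r z X) \<longlongrightarrow> d * b) F" unfolding eB by simp
qed

lemma lim_ps:
  assumes "((\<lambda>n. Aof z X (n+1)) \<longlongrightarrow> a) F" "((\<lambda>n. Bof z X (n+1)) \<longlongrightarrow> b) F"
    "((\<lambda>n. Ep q r (n-1)) \<longlongrightarrow> e) F" "(Dp q r \<longlongrightarrow> d) F" "(q \<longlongrightarrow> 0) F"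
  shows "(Aof z (Gps q r z X) \<longlongrightarrow> e * a) F" "(Bof z (Gps q r z X) \<longlongrightarrow> d * b) F"
proof -
  have eA: "Aof z (Gps q r z X) = (\<lambda>n. Ep q r (n-1) * (Aof z X (n+1) + q n * (z powi (n+1))^2 * Bof z X (n+1)))"
    by (rule ext) (rule Aof_Gps)
  have "((\<lambda>n. q n * (z powi (n+1))^2 * Bof z X (n+1)) \<longlongrightarrow> 0) F"
    by (rule tendsto_zero_mult_bdd[OF assms(5) c2 assms(2)])
  then have "((\<lambda>n. Ep q r (n-1) * (Aof z X (n+1) + q n * (z powi (n+1))^2 * Bof z X (n+1))) \<longlongrightarrow> e * (a + 0)) F"
    by (intro tendsto_mult tendsto_add assms)
  then show "(Aof z (Gps q r z X) \<longlongrightarrow> e * a) F" unfolding eA by simp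
  have eB: "Bof z (Gps q r z X) = (\<lambda>n. Dp q r n * Bof z X (n+1))" by (rule ext) (rule Bof_Gps)
  show "(Bof z (Gps q r z X) \<longlongrightarrow> d * b) F" unfolding eB by (intro tendsto_mult assms)
qed

lemma lim_uv_inv0:
  assumes "(Aof z Y \<longlongrightarrow> 0) F" "(Bof z Y \<longlongrightarrow> 0) F" "((\<lambda>n. Ep q r (n-1)) \<longlongrightarrow> e) F" "e \<noteq> 0"
    "((\<lambda>n. Dp q r (n-1)) \<longlongrightarrow> d) F" "d \<noteq> 0" "(r \<longlongrightarrow> 0) F"
  shows "(Aof z (Guv_inv q r z Y) \<longlongrightarrow> 0) F" "(Bof z (Guv_inv q r z Y) \<longlongrightarrow> 0) F"
proof -
  have eA: "Aof z (Guv_inv q r z Y) = (\<lambda>n. wz z * Aof z Y n / Ep q r (n-1))" by (rule ext) (rule Aof_Guv_inv)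
  have "((\<lambda>n. wz z * Aof z Y n / Ep q r (n-1)) \<longlongrightarrow> wz z * 0 / e) F"
    by (intro tendsto_divide tendsto_mult tendsto_const assms)
  then show "(Aof z (Guv_inv q r z Y) \<longlongrightarrow> 0) F" unfolding eA by simp
  have eB: "Bof z (Guv_inv q r z Y) = (\<lambda>n. Bof z Y n / Dp q r (n-1) + r n * (inverse (z powi n))^2 * Aof z Y n / Ep q r (n-1))"
    by (rule ext) (rule Bof_Guv_inv)
  have "((\<lambda>n. r n * (inverse (z powi n))^2 * Aof z Y n) \<longlongrightarrow> 0) F"
    by (rule tendsto_zero_mult_bdd[OF assms(7) c1 assms(1)])
  then have "((\<lambda>n. Bof z Y n / Dp q r (n-1) + r n * (inverse (z powi n))^2 * Aof z Y n / Ep q r (n-1)) \<longlongrightarrow> 0 / d + 0 / e) F"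
    by (intro tendsto_add tendsto_divide assms)
  then show "(Bof z (Guv_inv q r z Y) \<longlongrightarrow> 0) F" unfolding eB by simp
qed

lemma lim_ps_inv0:
  assumes "((\<lambda>n. Aof z Y (n-1)) \<longlongrightarrow> 0) F" "((\<lambda>n. Bof z Y (n-1)) \<longlongrightarrow> 0) F"
    "((\<lambda>n. Ep q r (n-2)) \<longlongrightarrow> e) F" "e \<noteq> 0"
    "((\<lambda>n. Dp q r (n-1)) \<longlongrightarrow> d) F" "d \<noteq> 0" "((\<lambda>n. q (n-1)) \<longlongrightarrow> 0) F"
  shows "(Aof z (Gps_inv q r z Y) \<longlongrightarrow> 0) F" "(Bof z (Gps_inv q r z Y) \<longlongrightarrow> 0) F"
proof -
  have eA: "Aof z (Gps_inv q r z Y) = (\<lambda>n. Aof z Y (n-1) / Ep q r (n-2) - q (n-1) * (z powi n)^2 * Bof z Y (n-1) / Dp q r (n-1))"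
    by (rule ext) (rule Aof_Gps_inv)
  have "((\<lambda>n. q (n-1) * (z powi n)^2 * Bof z Y (n-1)) \<longlongrightarrow> 0) F"
    by (rule tendsto_zero_mult_bdd[OF assms(7) c2 assms(2)])
  then have "((\<lambda>n. Aof z Y (n-1) / Ep q r (n-2) - q (n-1) * (z powi n)^2 * Bof z Y (n-1) / Dp q r (n-1)) \<longlongrightarrow> 0 / e - 0 / d) F"
    by (intro tendsto_diff tendsto_divide assms)
  then show "(Aof z (Gps_inv q r z Y) \<longlongrightarrow> 0) F" unfolding eA by simp
  have eB: "Bof z (Gps_inv q r z Y) = (\<lambda>n. Bof z Y (n-1) / Dp q r (n-1))" by (rule ext) (rule Bof_Gps_inv)
  have "((\<lambda>n. Bof z Y (n-1) / Dp q r (n-1)) \<longlongrightarrow> 0 / d) F" by (intro tendsto_divide assms)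
  then show "(Bof z (Gps_inv q r z Y) \<longlongrightarrow> 0) F" unfolding eB by simp
qed

lemma Em1: "((\<lambda>n. Ep q r (n-1)) \<longlongrightarrow> Einf q r) at_top" "((\<lambda>n. Ep q r (n-1)) \<longlongrightarrow> 1) at_bot"
  by (rule shift_m1_top[OF E_all(4)], rule shift_m1_bot[OF E_all(3)])
lemma Em2: "((\<lambda>n. Ep q r (n-2)) \<longlongrightarrow> Einf q r) at_top" "((\<lambda>n. Ep q r (n-2)) \<longlongrightarrow> 1) at_bot"
  by (rule shift_m2_top[OF E_all(4)], rule shift_m2_bot[OF E_all(3)])
lemma Dm1: "((\<lambda>n. Dp q r (n-1)) \<longlongrightarrow> Dinf q r) at_top" "((\<lambda>n. Dp q r (n-1)) \<longlongrightarrow> 1) at_bot"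
  by (rule shift_m1_top[OF D_all(4)], rule shift_m1_bot[OF D_all(3)])

lemma guv0: "guv q r z n (0, 0) = (0, 0)" by (simp add: guv_def)
lemma gps0: "gps q r z n (0, 0) = (0, 0)" by (simp add: gps_def)

lemma UV_zeroP: "zeroP (sysU (uu q r) (vv q r)) z at_top" "zeroP (sysU (uu q r) (vv q r)) z at_bot"
proof -
  have gen: "zeroP (sysU (uu q r) (vv q r)) z F"
    if FQ: "zeroP (sysQ q r) z F" and e: "((\<lambda>n. Ep q r (n-1)) \<longlongrightarrow> e) F" "e \<noteq> 0"
      and d: "((\<lambda>n. Dp q r (n-1)) \<longlongrightarrow> d) F" "d \<noteq> 0" and rF: "(r \<longlongrightarrow> 0) F" for F e d
    unfolding zeroP_def
  proof (intro allI impI)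
    fix Y n assume Y: "solves (sysU (uu q r) (vv q r)) z Y" and A0: "(Aof z Y \<longlongrightarrow> 0) F" and B0: "(Bof z Y \<longlongrightarrow> 0) F"
    define X where "X = Guv_inv q r z Y"
    have sX: "solves (sysQ q r) z X" unfolding X_def by (rule Guv_inv_solves[OF J_ctx Y])
    have "X m = (0, 0)" for m
      using FQ sX lim_uv_inv0[OF A0 B0 e d rF] unfolding zeroP_def X_def by blast
    moreover have "Y n = guv q r z n (X n)" using Guv_Guv_inv[OF J_ctx, of Y] unfolding X_def Guv_guv by metis
    ultimately show "Y n = (0, 0)" by (simp add: guv0)
  qed
  show "zeroP (sysU (uu q r) (vv q r)) z at_top"
    by (rule gen[OF Q_zeroP_top[OF z1 sk] Em1(1) E_all(5) Dm1(1) D_all(5) r0(1)])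
  show "zeroP (sysU (uu q r) (vv q r)) z at_bot"
    by (rule gen[OF Q_zeroP_bot[OF z1 sk] Em1(2) _ Dm1(2) _ r0(2)]) simp_all
qed

lemma PS_zeroP: "zeroP (sysU (pp q r) (ss q r)) z at_top" "zeroP (sysU (pp q r) (ss q r)) z at_bot"
proof -
  have gen: "zeroP (sysU (pp q r) (ss q r)) z F"
    if FQ: "zeroP (sysQ q r) z F" and e: "((\<lambda>n. Ep q r (n-2)) \<longlongrightarrow> e) F" "e \<noteq> 0"
      and d: "((\<lambda>n. Dp q r (n-1)) \<longlongrightarrow> d) F" "d \<noteq> 0" and qF: "((\<lambda>n. q (n-1)) \<longlongrightarrow> 0) F"
      and sh: "\<And>(f::int \<Rightarrow> complex) L. (f \<longlongrightarrow> L) F \<Longrightarrow> ((\<lambda>n. f (n-1)) \<longlongrightarrow> L) F" for F e d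
    unfolding zeroP_def
  proof (intro allI impI)
    fix Y n assume Y: "solves (sysU (pp q r) (ss q r)) z Y" and A0: "(Aof z Y \<longlongrightarrow> 0) F" and B0: "(Bof z Y \<longlongrightarrow> 0) F"
    define X where "X = Gps_inv q r z Y"
    have sX: "solves (sysQ q r) z X" unfolding X_def by (rule Gps_inv_solves[OF J_ctx Y])
    have "X m = (0, 0)" for m
      using FQ sX lim_ps_inv0[OF sh[OF A0] sh[OF B0] e d qF] unfolding zeroP_def X_def by blast
    moreover have "Y n = gps q r z n (X (n+1))" using Gps_Gps_inv[OF J_ctx, of Y] unfolding X_def Gps_gps by metis
    ultimately show "Y n = (0, 0)" by (simp add: gps0)
  qed
  show "zeroP (sysU (pp q r) (ss q r)) z at_top"
    by (rule gen[OF Q_zeroP_top[OF z1 sk] Em2(1) E_all(5) Dm1(1) D_all(5) shift_m1_top[OF q0(1)] shift_m1_top])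
  show "zeroP (sysU (pp q r) (ss q r)) z at_bot"
    by (rule gen[OF Q_zeroP_bot[OF z1 sk] Em2(2) _ Dm1(2) _ shift_m1_bot[OF q0(2)] shift_m1_bot]) simp_all
qed

end


lemma lc0_lim:
  "(Aof z Y \<longlongrightarrow> a) F \<Longrightarrow> (Aof z (lc c 0 Y Y) \<longlongrightarrow> c * a) F"
  "(Bof z Y \<longlongrightarrow> b) F \<Longrightarrow> (Bof z (lc c 0 Y Y) \<longlongrightarrow> c * b) F"
proof -
  assume "(Aof z Y \<longlongrightarrow> a) F"
  then have "((\<lambda>n. c * Aof z Y n + 0 * Aof z Y n) \<longlongrightarrow> c * a + 0 * a) F" by (intro tendsto_intros)
  then show "(Aof z (lc c 0 Y Y) \<longlongrightarrow> c * a) F" unfolding Aof_lc[abs_def] by simp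
next
  assume "(Bof z Y \<longlongrightarrow> b) F"
  then have "((\<lambda>n. c * Bof z Y n + 0 * Bof z Y n) \<longlongrightarrow> c * b + 0 * b) F" by (intro tendsto_intros)
  then show "(Bof z (lc c 0 Y Y) \<longlongrightarrow> c * b) F" unfolding Bof_lc[abs_def] by simp
qed

lemma W_eq:
  assumes "norm z = 1"
  shows "Aof z X n * Bof z Y n - Bof z X n * Aof z Y n = fst (X n) * snd (Y n) - snd (X n) * fst (Y n)"
proof -
  have "z powi n \<noteq> 0" using assms by auto
  then have "z powi n * z powi (-n) = 1" by (simp add: power_int_minus)
  moreover have "Aof z X n * Bof z Y n - Bof z X n * Aof z Y n = (fst (X n) * snd (Y n) - snd (X n) * fst (Y n)) * (z powi n * z powi (-n))"
    unfolding Aof_def Bof_def by (simp add: algebra_simps)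
  ultimately show ?thesis by simp
qed

lemma W_step:
  assumes z1: "norm z = 1" and sX: "solves (sysQ q r) z X" and sY: "solves (sysQ q r) z Y"
  shows "fst (X n) * snd (Y n) - snd (X n) * fst (Y n) = fst (X (n+1)) * snd (Y (n+1)) - snd (X (n+1)) * fst (Y (n+1))"
proof -
  have z0: "z \<noteq> 0" using z1 by auto
  define a where "a = z" define b where "b = (z - inverse z) * q n"
  define c where "c = z * r n" define d where "d = inverse z + (z - inverse z) * q n * r n"
  have X1: "fst (X n) = a * fst (X (n+1)) + b * snd (X (n+1))" and X2: "snd (X n) = c * fst (X (n+1)) + d * snd (X (n+1))"
    using Q_eqs[OF z1 sX, of n] by (simp_all add: a_def b_def c_def d_def mult.assoc)
  have Y1: "fst (Y n) = a * fst (Y (n+1)) + b * snd (Y (n+1))" and Y2: "snd (Y n) = c * fst (Y (n+1)) + d * snd (Y (n+1))"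
    using Q_eqs[OF z1 sY, of n] by (simp_all add: a_def b_def c_def d_def mult.assoc)
  have det: "a * d - b * c = 1" using z0 by (simp add: a_def b_def c_def d_def field_simps)
  have "fst (X n) * snd (Y n) - snd (X n) * fst (Y n) = (a * d - b * c) * (fst (X (n+1)) * snd (Y (n+1)) - snd (X (n+1)) * fst (Y (n+1)))"
    unfolding X1 X2 Y1 Y2 by (simp add: algebra_simps)
  then show ?thesis using det by simp
qed

lemma const_int: assumes "\<And>n::int. f (n+1) = f n" shows "f n = f 0"
proof (induct n rule: int_induct[where k=0])
  case base then show ?case by simp
next
  case (step1 i) then show ?case using assms[of i] by simp
next
  case (step2 i) then show ?case using assms[of "i-1"] by simp
qed

lemma Wr_lim:
  assumes z1: "norm z = 1" and sX: "solves (sysQ q r) z X" and sY: "solves (sysQ q r) z Y"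
    and "(Aof z X \<longlongrightarrow> a1) at_top" "(Bof z X \<longlongrightarrow> b1) at_top" "(Aof z Y \<longlongrightarrow> a2) at_top" "(Bof z Y \<longlongrightarrow> b2) at_top"
    and "(Aof z X \<longlongrightarrow> a3) at_bot" "(Bof z X \<longlongrightarrow> b3) at_bot" "(Aof z Y \<longlongrightarrow> a4) at_bot" "(Bof z Y \<longlongrightarrow> b4) at_bot"
  shows "a1 * b2 - b1 * a2 = a3 * b4 - b3 * a4"
proof -
  define W where "W n = Aof z X n * Bof z Y n - Bof z X n * Aof z Y n" for n
  have "W (n+1) = W n" for n unfolding W_def W_eq[OF z1] using W_step[OF z1 sX sY, of n] by simp
  then have Wc: "W n = W 0" for n by (rule const_int)
  have Wf: "W = (\<lambda>_. W 0)" by (rule ext) (rule Wc)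
  have "(W \<longlongrightarrow> a1 * b2 - b1 * a2) at_top" unfolding W_def[abs_def] by (intro tendsto_intros assms)
  moreover have "(W \<longlongrightarrow> W 0) at_top" by (subst Wf) (rule tendsto_const)
  ultimately have 1: "a1 * b2 - b1 * a2 = W 0" using tendsto_unique[OF trivial_limit_at_top_linorder] by blast
  have "(W \<longlongrightarrow> a3 * b4 - b3 * a4) at_bot" unfolding W_def[abs_def] by (intro tendsto_intros assms)
  moreover have "(W \<longlongrightarrow> W 0) at_bot" by (subst Wf) (rule tendsto_const)
  ultimately have 2: "a3 * b4 - b3 * a4 = W 0" using tendsto_unique[OF trivial_limit_at_bot_linorder] by blast
  show ?thesis using 1 2 by simp
qed

lemma Tl_eq: "Tl M z = 1 / Lim at_bot (Bof z (psi M z))" by (simp add: Tl_def Bof_def[abs_def])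
lemma Lc_eq: "Lc M z = Tl M z * Lim at_bot (Aof z (psi M z))" by (simp add: Lc_def Aof_def[abs_def])
lemma Tr_eq: "Tr M z = 1 / Lim at_top (Aof z (phi M z))" by (simp add: Tr_def Aof_def[abs_def])
lemma Rc_eq: "Rc M z = Tr M z * Lim at_top (Bof z (phi M z))" by (simp add: Rc_def Bof_def[abs_def])
lemma Tlbar_eq: "Tlbar M z = 1 / Lim at_bot (Aof z (psibar M z))" by (simp add: Tlbar_def Aof_def[abs_def])
lemma Lbar_eq: "Lbar M z = Tlbar M z * Lim at_bot (Bof z (psibar M z))" by (simp add: Lbar_def Bof_def[abs_def])
lemma Trbar_eq: "Trbar M z = 1 / Lim at_top (Bof z (phibar M z))" by (simp add: Trbar_def Bof_def[abs_def])
lemma Rbar_eq: "Rbar M z = Trbar M z * Lim at_top (Aof z (phibar M z))" by (simp add: Rbar_def Aof_def[abs_def])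


lemma psi_transfer:
  assumes z1: "norm z = 1" and zp: "zeroP M z at_top" and sY: "solves M z Y"
    and "(Aof z Y \<longlongrightarrow> a1) at_top" "(Bof z Y \<longlongrightarrow> b1) at_top" "(Aof z Y \<longlongrightarrow> a2) at_bot" "(Bof z Y \<longlongrightarrow> b2) at_bot"
    and "c * a1 = 0" "c * b1 = 1"
  shows "Lim at_bot (Aof z (psi M z)) = c * a2 \<and> Lim at_bot (Bof z (psi M z)) = c * b2"
proof -
  have s: "solves M z (lc c 0 Y Y)" by (rule solves_lc[OF sY sY])
  have "is_psi M z (lc c 0 Y Y)" unfolding is_psi_iff[OF z1]
    using s lc0_lim(1)[OF assms(4), of c] lc0_lim(2)[OF assms(5), of c] assms(8,9) by simp
  then have "psi M z = lc c 0 Y Y" by (rule psi_eq[OF z1 zp])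
  then show ?thesis using lc0_lim(1)[OF assms(6), of c] lc0_lim(2)[OF assms(7), of c] by (simp add: tendsto_Lim_bot)
qed

lemma phi_transfer:
  assumes z1: "norm z = 1" and zp: "zeroP M z at_bot" and sY: "solves M z Y"
    and "(Aof z Y \<longlongrightarrow> a1) at_top" "(Bof z Y \<longlongrightarrow> b1) at_top" "(Aof z Y \<longlongrightarrow> a2) at_bot" "(Bof z Y \<longlongrightarrow> b2) at_bot"
    and "c * a2 = 1" "c * b2 = 0"
  shows "Lim at_top (Aof z (phi M z)) = c * a1 \<and> Lim at_top (Bof z (phi M z)) = c * b1"
proof -
  have s: "solves M z (lc c 0 Y Y)" by (rule solves_lc[OF sY sY])
  have "is_phi M z (lc c 0 Y Y)" unfolding is_phi_iff[OF z1]
    using s lc0_lim(1)[OF assms(6), of c] lc0_lim(2)[OF assms(7), of c] assms(8,9) by simp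
  then have "phi M z = lc c 0 Y Y" by (rule phi_eq[OF z1 zp])
  then show ?thesis using lc0_lim(1)[OF assms(4), of c] lc0_lim(2)[OF assms(5), of c] by (simp add: tendsto_Lim_top)
qed

lemma psibar_transfer:
  assumes z1: "norm z = 1" and zp: "zeroP M z at_top" and sY: "solves M z Y"
    and "(Aof z Y \<longlongrightarrow> a1) at_top" "(Bof z Y \<longlongrightarrow> b1) at_top" "(Aof z Y \<longlongrightarrow> a2) at_bot" "(Bof z Y \<longlongrightarrow> b2) at_bot"
    and "c * a1 = 1" "c * b1 = 0"
  shows "Lim at_bot (Aof z (psibar M z)) = c * a2 \<and> Lim at_bot (Bof z (psibar M z)) = c * b2"
proof -
  have s: "solves M z (lc c 0 Y Y)" by (rule solves_lc[OF sY sY])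
  have "is_psibar M z (lc c 0 Y Y)" unfolding is_psibar_iff[OF z1]
    using s lc0_lim(1)[OF assms(4), of c] lc0_lim(2)[OF assms(5), of c] assms(8,9) by simp
  then have "psibar M z = lc c 0 Y Y" by (rule psibar_eq[OF z1 zp])
  then show ?thesis using lc0_lim(1)[OF assms(6), of c] lc0_lim(2)[OF assms(7), of c] by (simp add: tendsto_Lim_bot)
qed

lemma phibar_transfer:
  assumes z1: "norm z = 1" and zp: "zeroP M z at_bot" and sY: "solves M z Y"
    and "(Aof z Y \<longlongrightarrow> a1) at_top" "(Bof z Y \<longlongrightarrow> b1) at_top" "(Aof z Y \<longlongrightarrow> a2) at_bot" "(Bof z Y \<longlongrightarrow> b2) at_bot"
    and "c * a2 = 0" "c * b2 = 1"
  shows "Lim at_top (Aof z (phibar M z)) = c * a1 \<and> Lim at_top (Bof z (phibar M z)) = c * b1"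
proof -
  have s: "solves M z (lc c 0 Y Y)" by (rule solves_lc[OF sY sY])
  have "is_phibar M z (lc c 0 Y Y)" unfolding is_phibar_iff[OF z1]
    using s lc0_lim(1)[OF assms(6), of c] lc0_lim(2)[OF assms(7), of c] assms(8,9) by simp
  then have "phibar M z = lc c 0 Y Y" by (rule phibar_eq[OF z1 zp])
  then show ?thesis using lc0_lim(1)[OF assms(4), of c] lc0_lim(2)[OF assms(5), of c] by (simp add: tendsto_Lim_top)
qed


theorem theorem3p4:
  fixes q r :: "int \<Rightarrow> complex" and z :: complex
  assumes "rapid_decay q" and "rapid_decay r"
    and "\<And>n. 1 - q n * r n \<noteq> 0" and "\<And>n. 1 + q n * r (n+1) \<noteq> 0"
    and "norm z = 1" and "z\<^sup>2 \<noteq> 1"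
  defines "Q \<equiv> sysQ q r"
    and "UV \<equiv> sysU (uu q r) (vv q r)"
    and "PS \<equiv> sysU (pp q r) (ss q r)"
    and "D \<equiv> Dinf q r" and "E \<equiv> Einf q r"
    and "T \<equiv> Tl (sysQ q r) z" and "Tb \<equiv> Tlbar (sysQ q r) z"
  shows "Tl UV z = D * T \<and> Tl PS z = D * T
    \<and> Tr UV z = T / E \<and> Tr PS z = T / E
    \<and> Tlbar UV z = E * Tb \<and> Tlbar PS z = E * Tb
    \<and> Trbar UV z = Tb / D \<and> Trbar PS z = Tb / D
    \<and> Rc UV z = (1 - z powi (-2)) * (D / E) * Rc Q z
    \<and> Rc PS z = (D / E) * Rc Q z
    \<and> Rbar UV z = 1 / (1 - z powi (-2)) * (E / D) * Rbar Q z
    \<and> Rbar PS z = (E / D) * Rbar Q z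
    \<and> Lc UV z = 1 / (1 - z powi (-2)) * Lc Q z
    \<and> Lc PS z = Lc Q z
    \<and> Lbar UV z = (1 - z powi (-2)) * Lbar Q z
    \<and> Lbar PS z = Lbar Q z"
proof -
  have rq: "rapid_decay q" and rr: "rapid_decay r" and nz1: "\<And>n. 1 - q n * r n \<noteq> 0"
    and nz2: "\<And>n. 1 + q n * r (n+1) \<noteq> 0" and z1: "norm z = 1" and z2: "z^2 \<noteq> 1"
    using assms(1-6) by auto
  have defs: "Q = sysQ q r" "UV = sysU (uu q r) (vv q r)" "PS = sysU (pp q r) (ss q r)"
    "D = Dinf q r" "E = Einf q r" "T = Tl (sysQ q r) z" "Tb = Tlbar (sysQ q r) z"
    using assms(7-13) by simp_all
  note ctx = rq rr nz1 nz2 z1 z2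
  note Jc = J_ctx[OF ctx]
  have sk: "sum2 (kq q r)" by (rule sk[OF ctx])
  have Dnz: "Dinf q r \<noteq> 0" by (rule D_all(5)[OF ctx])
  have Enz: "Einf q r \<noteq> 0" by (rule E_all(5)[OF ctx])
  have wnz: "wz z \<noteq> 0" by (rule wnz[OF ctx])
  have w: "1 - z powi (-2) = wz z" by (simp add: wz_def power_int_minus)
  note E1 = Em1[OF ctx] and D1 = Dm1[OF ctx] and Dt = D_all(4)[OF ctx] and Db = D_all(3)[OF ctx]
  note r0' = r0[OF ctx] and q0' = q0[OF ctx]
  note zUV = UV_zeroP[OF ctx] and zPS = PS_zeroP[OF ctx]

  define psQ where "psQ = psi (sysQ q r) z"
  have "is_psi (sysQ q r) z psQ" unfolding psQ_def by (rule Q_psi[OF z1 sk])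
  then have sps: "solves (sysQ q r) z psQ" and psAt: "(Aof z psQ \<longlongrightarrow> 0) at_top"
    and psBt: "(Bof z psQ \<longlongrightarrow> 1) at_top" by (simp_all add: is_psi_iff[OF z1])
  obtain pa where psAb: "(Aof z psQ \<longlongrightarrow> pa) at_bot" using Q_conv(2)[OF z1 sk sps] by blast
  obtain pb where psBb: "(Bof z psQ \<longlongrightarrow> pb) at_bot" using Q_conv(4)[OF z1 sk sps] by blast

  define phQ where "phQ = phi (sysQ q r) z"
  have "is_phi (sysQ q r) z phQ" unfolding phQ_def by (rule Q_phi[OF z1 sk])
  then have sph: "solves (sysQ q r) z phQ" and phAb: "(Aof z phQ \<longlongrightarrow> 1) at_bot"
    and phBb: "(Bof z phQ \<longlongrightarrow> 0) at_bot" by (simp_all add: is_phi_iff[OF z1])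
  obtain fa where phAt: "(Aof z phQ \<longlongrightarrow> fa) at_top" using Q_conv(1)[OF z1 sk sph] by blast
  obtain fb where phBt: "(Bof z phQ \<longlongrightarrow> fb) at_top" using Q_conv(3)[OF z1 sk sph] by blast

  define pbQ where "pbQ = psibar (sysQ q r) z"
  have "is_psibar (sysQ q r) z pbQ" unfolding pbQ_def by (rule Q_psibar[OF z1 sk])
  then have spb: "solves (sysQ q r) z pbQ" and pbAt: "(Aof z pbQ \<longlongrightarrow> 1) at_top"
    and pbBt: "(Bof z pbQ \<longlongrightarrow> 0) at_top" by (simp_all add: is_psibar_iff[OF z1])
  obtain ba where pbAb: "(Aof z pbQ \<longlongrightarrow> ba) at_bot" using Q_conv(2)[OF z1 sk spb] by blast
  obtain bb where pbBb: "(Bof z pbQ \<longlongrightarrow> bb) at_bot" using Q_conv(4)[OF z1 sk spb] by blast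

  define fbQ where "fbQ = phibar (sysQ q r) z"
  have "is_phibar (sysQ q r) z fbQ" unfolding fbQ_def by (rule Q_phibar[OF z1 sk])
  then have sfb: "solves (sysQ q r) z fbQ" and fbAb: "(Aof z fbQ \<longlongrightarrow> 0) at_bot"
    and fbBb: "(Bof z fbQ \<longlongrightarrow> 1) at_bot" by (simp_all add: is_phibar_iff[OF z1])
  obtain ga where fbAt: "(Aof z fbQ \<longlongrightarrow> ga) at_top" using Q_conv(1)[OF z1 sk sfb] by blast
  obtain gb where fbBt: "(Bof z fbQ \<longlongrightarrow> gb) at_top" using Q_conv(3)[OF z1 sk sfb] by blast

  have TlQ: "Tl (sysQ q r) z = 1 / pb" by (simp add: Tl_eq psQ_def[symmetric] tendsto_Lim_bot[OF psBb])
  have LcQ: "Lc (sysQ q r) z = 1 / pb * pa" by (simp add: Lc_eq TlQ psQ_def[symmetric] tendsto_Lim_bot[OF psAb])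
  have TrQ: "Tr (sysQ q r) z = 1 / fa" by (simp add: Tr_eq phQ_def[symmetric] tendsto_Lim_top[OF phAt])
  have RcQ: "Rc (sysQ q r) z = 1 / fa * fb" by (simp add: Rc_eq TrQ phQ_def[symmetric] tendsto_Lim_top[OF phBt])
  have TlbQ: "Tlbar (sysQ q r) z = 1 / ba" by (simp add: Tlbar_eq pbQ_def[symmetric] tendsto_Lim_bot[OF pbAb])
  have LbQ: "Lbar (sysQ q r) z = 1 / ba * bb" by (simp add: Lbar_eq TlbQ pbQ_def[symmetric] tendsto_Lim_bot[OF pbBb])
  have TrbQ: "Trbar (sysQ q r) z = 1 / gb" by (simp add: Trbar_eq fbQ_def[symmetric] tendsto_Lim_top[OF fbBt])
  have RbQ: "Rbar (sysQ q r) z = 1 / gb * ga" by (simp add: Rbar_eq TrbQ fbQ_def[symmetric] tendsto_Lim_top[OF fbAt])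

  have "fa * 1 - fb * 0 = 1 * pb - 0 * pa"
    by (rule Wr_lim[OF z1 sph sps phAt phBt psAt psBt phAb phBb psAb psBb])
  then have W1: "fa = pb" by simp
  have "1 * gb - 0 * ga = ba * 1 - bb * 0"
    by (rule Wr_lim[OF z1 spb sfb pbAt pbBt fbAt fbBt pbAb pbBb fbAb fbBb])
  then have W2: "gb = ba" by simp

  note uvps_t = lim_uv[OF ctx psAt psBt E1(1) D1(1) r0'(1)]
  note uvps_b = lim_uv[OF ctx psAb psBb E1(2) D1(2) r0'(2)]
  have U1: "Lim at_bot (Aof z (psi UV z)) = 1 / Dinf q r * (1 * pa / wz z) \<and> Lim at_bot (Bof z (psi UV z)) = 1 / Dinf q r * (1 * pb)"
    unfolding defs by (rule psi_transfer[OF z1 zUV(1) Guv_solves[OF Jc sps] uvps_t uvps_b]) (use Dnz in simp_all)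
  note uvph_t = lim_uv[OF ctx phAt phBt E1(1) D1(1) r0'(1)]
  note uvph_b = lim_uv[OF ctx phAb phBb E1(2) D1(2) r0'(2)]
  have U2: "Lim at_top (Aof z (phi UV z)) = wz z * (Einf q r * fa / wz z) \<and> Lim at_top (Bof z (phi UV z)) = wz z * (Dinf q r * fb)"
    unfolding defs by (rule phi_transfer[OF z1 zUV(2) Guv_solves[OF Jc sph] uvph_t uvph_b]) (use wnz in simp_all)
  note uvpb_t = lim_uv[OF ctx pbAt pbBt E1(1) D1(1) r0'(1)]
  note uvpb_b = lim_uv[OF ctx pbAb pbBb E1(2) D1(2) r0'(2)]
  have U3: "Lim at_bot (Aof z (psibar UV z)) = wz z / Einf q r * (1 * ba / wz z) \<and> Lim at_bot (Bof z (psibar UV z)) = wz z / Einf q r * (1 * bb)"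
    unfolding defs by (rule psibar_transfer[OF z1 zUV(1) Guv_solves[OF Jc spb] uvpb_t uvpb_b]) (use wnz Enz in simp_all)
  note uvfb_t = lim_uv[OF ctx fbAt fbBt E1(1) D1(1) r0'(1)]
  note uvfb_b = lim_uv[OF ctx fbAb fbBb E1(2) D1(2) r0'(2)]
  have U4: "Lim at_top (Aof z (phibar UV z)) = 1 * (Einf q r * ga / wz z) \<and> Lim at_top (Bof z (phibar UV z)) = 1 * (Dinf q r * gb)"
    unfolding defs by (rule phibar_transfer[OF z1 zUV(2) Guv_solves[OF Jc sfb] uvfb_t uvfb_b]) simp_all

  note psps_t = lim_ps[OF ctx shift_p1_top[OF psAt] shift_p1_top[OF psBt] E1(1) Dt q0'(1)]
  note psps_b = lim_ps[OF ctx shift_p1_bot[OF psAb] shift_p1_bot[OF psBb] E1(2) Db q0'(2)]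
  have P1: "Lim at_bot (Aof z (psi PS z)) = 1 / Dinf q r * (1 * pa) \<and> Lim at_bot (Bof z (psi PS z)) = 1 / Dinf q r * (1 * pb)"
    unfolding defs by (rule psi_transfer[OF z1 zPS(1) Gps_solves[OF Jc sps] psps_t psps_b]) (use Dnz in simp_all)
  note psph_t = lim_ps[OF ctx shift_p1_top[OF phAt] shift_p1_top[OF phBt] E1(1) Dt q0'(1)]
  note psph_b = lim_ps[OF ctx shift_p1_bot[OF phAb] shift_p1_bot[OF phBb] E1(2) Db q0'(2)]
  have P2: "Lim at_top (Aof z (phi PS z)) = 1 * (Einf q r * fa) \<and> Lim at_top (Bof z (phi PS z)) = 1 * (Dinf q r * fb)"
    unfolding defs by (rule phi_transfer[OF z1 zPS(2) Gps_solves[OF Jc sph] psph_t psph_b]) simp_all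
  note pspb_t = lim_ps[OF ctx shift_p1_top[OF pbAt] shift_p1_top[OF pbBt] E1(1) Dt q0'(1)]
  note pspb_b = lim_ps[OF ctx shift_p1_bot[OF pbAb] shift_p1_bot[OF pbBb] E1(2) Db q0'(2)]
  have P3: "Lim at_bot (Aof z (psibar PS z)) = 1 / Einf q r * (1 * ba) \<and> Lim at_bot (Bof z (psibar PS z)) = 1 / Einf q r * (1 * bb)"
    unfolding defs by (rule psibar_transfer[OF z1 zPS(1) Gps_solves[OF Jc spb] pspb_t pspb_b]) (use Enz in simp_all)
  note psfb_t = lim_ps[OF ctx shift_p1_top[OF fbAt] shift_p1_top[OF fbBt] E1(1) Dt q0'(1)]
  note psfb_b = lim_ps[OF ctx shift_p1_bot[OF fbAb] shift_p1_bot[OF fbBb] E1(2) Db q0'(2)]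
  have P4: "Lim at_top (Aof z (phibar PS z)) = 1 * (Einf q r * ga) \<and> Lim at_top (Bof z (phibar PS z)) = 1 * (Dinf q r * gb)"
    unfolding defs by (rule phibar_transfer[OF z1 zPS(2) Gps_solves[OF Jc sfb] psfb_t psfb_b]) simp_all

  have TlU: "Tl UV z = 1 / (1 / Dinf q r * (1 * pb))" by (simp only: Tl_eq U1[THEN conjunct2])
  have LcU: "Lc UV z = Tl UV z * (1 / Dinf q r * (1 * pa / wz z))" by (simp only: Lc_eq U1[THEN conjunct1])
  have TrU: "Tr UV z = 1 / (wz z * (Einf q r * fa / wz z))" by (simp only: Tr_eq U2[THEN conjunct1])
  have RcU: "Rc UV z = Tr UV z * (wz z * (Dinf q r * fb))" by (simp only: Rc_eq U2[THEN conjunct2])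
  have TlbU: "Tlbar UV z = 1 / (wz z / Einf q r * (1 * ba / wz z))" by (simp only: Tlbar_eq U3[THEN conjunct1])
  have LbU: "Lbar UV z = Tlbar UV z * (wz z / Einf q r * (1 * bb))" by (simp only: Lbar_eq U3[THEN conjunct2])
  have TrbU: "Trbar UV z = 1 / (1 * (Dinf q r * gb))" by (simp only: Trbar_eq U4[THEN conjunct2])
  have RbU: "Rbar UV z = Trbar UV z * (1 * (Einf q r * ga / wz z))" by (simp only: Rbar_eq U4[THEN conjunct1])
  have TlP: "Tl PS z = 1 / (1 / Dinf q r * (1 * pb))" by (simp only: Tl_eq P1[THEN conjunct2])
  have LcP: "Lc PS z = Tl PS z * (1 / Dinf q r * (1 * pa))" by (simp only: Lc_eq P1[THEN conjunct1])
  have TrP: "Tr PS z = 1 / (1 * (Einf q r * fa))" by (simp only: Tr_eq P2[THEN conjunct1])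
  have RcP: "Rc PS z = Tr PS z * (1 * (Dinf q r * fb))" by (simp only: Rc_eq P2[THEN conjunct2])
  have TlbP: "Tlbar PS z = 1 / (1 / Einf q r * (1 * ba))" by (simp only: Tlbar_eq P3[THEN conjunct1])
  have LbP: "Lbar PS z = Tlbar PS z * (1 / Einf q r * (1 * bb))" by (simp only: Lbar_eq P3[THEN conjunct2])
  have TrbP: "Trbar PS z = 1 / (1 * (Dinf q r * gb))" by (simp only: Trbar_eq P4[THEN conjunct2])
  have RbP: "Rbar PS z = Trbar PS z * (1 * (Einf q r * ga))" by (simp only: Rbar_eq P4[THEN conjunct1])
  note dd = defs(4) defs(5) defs(6) defs(7)
  have Qd: "Q = sysQ q r" by (rule defs(1))
  have c1: "Tl UV z = D * T" unfolding TlU dd TlQ using Dnz by simp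
  have c2: "Tl PS z = D * T" unfolding TlP dd TlQ using Dnz by simp
  have c3: "Tr UV z = T / E" unfolding TrU dd TlQ W1[symmetric] using wnz Enz by simp
  have c4: "Tr PS z = T / E" unfolding TrP dd TlQ W1[symmetric] using Enz by simp
  have c5: "Tlbar UV z = E * Tb" unfolding TlbU dd TlbQ using wnz Enz by simp
  have c6: "Tlbar PS z = E * Tb" unfolding TlbP dd TlbQ using Enz by simp
  have c7: "Trbar UV z = Tb / D" unfolding TrbU dd TlbQ W2[symmetric] using Dnz by simp
  have c8: "Trbar PS z = Tb / D" unfolding TrbP dd TlbQ W2[symmetric] using Dnz by simp
  have c9: "Rc UV z = (1 - z powi (-2)) * (D / E) * Rc Q z"
    unfolding RcU TrU dd Qd RcQ TrQ w using wnz Enz Dnz by (cases "fa = 0") (simp_all add: field_simps)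
  have c10: "Rc PS z = (D / E) * Rc Q z"
    unfolding RcP TrP dd Qd RcQ TrQ using Enz Dnz by (cases "fa = 0") (simp_all add: field_simps)
  have c11: "Rbar UV z = 1 / (1 - z powi (-2)) * (E / D) * Rbar Q z"
    unfolding RbU TrbU dd Qd RbQ TrbQ w using wnz Enz Dnz by (cases "gb = 0") (simp_all add: field_simps)
  have c12: "Rbar PS z = (E / D) * Rbar Q z"
    unfolding RbP TrbP dd Qd RbQ TrbQ using Enz Dnz by (cases "gb = 0") (simp_all add: field_simps)
  have c13: "Lc UV z = 1 / (1 - z powi (-2)) * Lc Q z"
    unfolding LcU TlU dd Qd LcQ TlQ w using wnz Dnz by (cases "pb = 0") (simp_all add: field_simps)
  have c14: "Lc PS z = Lc Q z"
    unfolding LcP TlP dd Qd LcQ TlQ using Dnz by (cases "pb = 0") (simp_all add: field_simps)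
  have c15: "Lbar UV z = (1 - z powi (-2)) * Lbar Q z"
    unfolding LbU TlbU dd Qd LbQ TlbQ w using wnz Enz by (cases "ba = 0") (simp_all add: field_simps)
  have c16: "Lbar PS z = Lbar Q z"
    unfolding LbP TlbP dd Qd LbQ TlbQ using Enz by (cases "ba = 0") (simp_all add: field_simps)
  show ?thesis using c1 c2 c3 c4 c5 c6 c7 c8 c9 c10 c11 c12 c13 c14 c15 c16 by blast
qed


end
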